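(* Let $\bar\mu_0\ge0$. For all $x,y\in\Omega$, $$G_k(\Omega)(x,y)=\sum_{w\in\mathrm{Img}(y)}G_k(x,w),$$ the series being absolutely convergent.
   Context: Setup: $d\ge1$, odd integer $L>1$, integers $k\ge1$, $m\ge k$, $\eta=L^{-k}$, $\Omega=\eta\{0,\dots,L^m-1\}^d$, $\Omega_k=\{0,\dots,L^{m-k}-1\}^d$. $\mathcal L^2(\Omega)$, $\mathcal L^2(\eta\mathbb Z^d)$ have inner products $\eta^d\sum\bar fg$. For $y\in\mathbb Z^d$, $B_k(y)=\{x\in\eta\mathbb Z^d: y_\mu\le x_\mu<y_\mu+1\ \forall\mu\}$. Averaging operators $(Q_{\Omega,k}f)(y)=\sum_{x\in B_k(y)}L^{-kd}f(x)$ for $y\in\Omega_k$ and $(Q_kf)(y)$ given by the same formula for $y\in\mathbb Z^d$, $f\in\mathcal L^2(\eta\mathbb Z^d)$; adjoints $(Q^*h)(x)=h(y_x)$ with $x\in B_k(y_x)$. Neumann Laplacian $(\Delta^\eta_\Omega f)(x)=\eta^{-2}\sum_\mu(f(x+\eta e_\mu)-2f(x)+f(x-\eta e_\mu))$, with $f(x\pm\eta e_\mu):=f(x)$ if $x\pm\eta e_\mu\notin\Omega$; free Laplacian $\Delta^\eta$ on $\eta\mathbb Z^d$ given by the same formula without replacement. Fix $a\in(0,1]$, $a_k=a\frac{1-L^{-2}}{1-L^{-2k}}$, $\bar\mu_k=L^{2k}\bar\mu_0$, $G_k(\Omega)=(-\Delta^\eta_\Omega+\bar\mu_k+a_kQ^*_{\Omega,k}Q_{\Omega,k})^{-1}$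 and $G_k=(-\Delta^\eta+\bar\mu_k+a_kQ_k^*Q_k)^{-1}$ (bounded on $\mathcal L^2(\eta\mathbb Z^d)$). Kernels: $G_k(\Omega)(x,y)=\langle\delta^\eta_x,G_k(\Omega)\delta^\eta_y\rangle$ and $G_k(x,y)=\langle\delta^\eta_x,G_k\delta^\eta_y\rangle$ with $\delta^\eta_x=\eta^{-d}\mathbb 1_{\{x\}}$. For $\mu=0,\dots,d-1$ let $P_\mu$ and $\bar P_\mu$ be the reflections of $\eta\mathbb Z^d$ changing only the $\mu$-th coordinate: $(P_\mu x)_\mu=-\eta-x_\mu$ and $(\bar P_\mu x)_\mu=(2L^m-1)\eta-x_\mu$ (reflections across the hyperplanes $x_\mu=-\eta/2$ and $x_\mu=(L^m-\tfrac12)\eta$). $\mathrm{Img}(y)$ is the orbit of $y$ under the group generated by all $P_\mu,\bar P_\mu$. *)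

theory Defs
  imports "HOL-Analysis.Analysis"
begin

text \<open>Lattice points of eta Z^d are represented by integer coordinate vectors
  n :: int^'d, standing for the point eta * n, with eta = L^(-k).
  The dimension d is CARD('d).\<close>

definition eta :: "nat \<Rightarrow> nat \<Rightarrow> real" where
  "eta L k = 1 / real L ^ k"

definition delta_pt :: "nat \<Rightarrow> nat \<Rightarrow> ('d::finite) itself \<Rightarrow> int^'d \<Rightarrow> int^'d \<Rightarrow> real" where
  "delta_pt L k TYPE_d y z = (if z = y then (1 / eta L k) ^ CARD('d) else 0)"

definition inOmega :: "nat \<Rightarrow> nat \<Rightarrow> int^'d \<Rightarrow> bool" where
  "inOmega L m n \<longleftrightarrow> (\<forall>i. 0 \<le> n$i \<and> n$i < int L ^ m)"

text \<open>Omega_k = {0,...,L^(m-k)-1}^d (unit lattice)\<close>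
definition inOmegak :: "nat \<Rightarrow> nat \<Rightarrow> nat \<Rightarrow> int^'d \<Rightarrow> bool" where
  "inOmegak L m k y \<longleftrightarrow> (\<forall>i. 0 \<le> y$i \<and> y$i < int L ^ (m - k))"

definition sh :: "int^'d \<Rightarrow> 'd \<Rightarrow> int \<Rightarrow> int^'d" where
  "sh n \<mu> s = (\<chi> i. if i = \<mu> then n$i + s else n$i)"

text \<open>Block B_k(y) for y in Z^d: the points eta*n with y_mu <= eta*n_mu < y_mu + 1\<close>
definition Blk :: "nat \<Rightarrow> nat \<Rightarrow> int^'d \<Rightarrow> (int^'d) set" where
  "Blk L k y = {n. \<forall>i. int L ^ k * y$i \<le> n$i \<and> n$i < int L ^ k * y$i + int L ^ k}"

definition blkof :: "nat \<Rightarrow> nat \<Rightarrow> int^'d \<Rightarrow> int^'d" where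
  "blkof L k n = (\<chi> i. n$i div (int L ^ k))"

definition Qk :: "nat \<Rightarrow> nat \<Rightarrow> (int^'d::finite \<Rightarrow> real) \<Rightarrow> int^'d \<Rightarrow> real" where
  "Qk L k f y = (\<Sum>x\<in>Blk L k y. (1 / real L ^ k) ^ CARD('d) * f x)"

definition Qk_adj :: "nat \<Rightarrow> nat \<Rightarrow> (int^'d \<Rightarrow> real) \<Rightarrow> int^'d \<Rightarrow> real" where
  "Qk_adj L k h x = h (blkof L k x)"

definition QOmk :: "nat \<Rightarrow> nat \<Rightarrow> nat \<Rightarrow> (int^'d::finite \<Rightarrow> real) \<Rightarrow> int^'d \<Rightarrow> real" where
  "QOmk L m k f y = (if inOmegak L m k y
      then (\<Sum>x\<in>Blk L k y. (1 / real L ^ k) ^ CARD('d) * f x) else 0)"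

definition QOmk_adj :: "nat \<Rightarrow> nat \<Rightarrow> (int^'d \<Rightarrow> real) \<Rightarrow> int^'d \<Rightarrow> real" where
  "QOmk_adj L k h x = h (blkof L k x)"

definition lap :: "nat \<Rightarrow> nat \<Rightarrow> (int^'d::finite \<Rightarrow> real) \<Rightarrow> int^'d \<Rightarrow> real" where
  "lap L k f x = (eta L k) powi (-2) *
     (\<Sum>\<mu>\<in>UNIV. f (sh x \<mu> 1) - 2 * f x + f (sh x \<mu> (-1)))"

definition lapN :: "nat \<Rightarrow> nat \<Rightarrow> nat \<Rightarrow> (int^'d::finite \<Rightarrow> real) \<Rightarrow> int^'d \<Rightarrow> real" where
  "lapN L m k f x = (eta L k) powi (-2) *
     (\<Sum>\<mu>\<in>UNIV. (if inOmega L m (sh x \<mu> 1) then f (sh x \<mu> 1) else f x) - 2 * f x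
               + (if inOmega L m (sh x \<mu> (-1)) then f (sh x \<mu> (-1)) else f x))"

definition a_k :: "nat \<Rightarrow> nat \<Rightarrow> real \<Rightarrow> real" where
  "a_k L k a = a * (1 - real L powi (-2)) / (1 - real L powi (- 2 * int k))"

definition mubar_k :: "nat \<Rightarrow> nat \<Rightarrow> real \<Rightarrow> real" where
  "mubar_k L k mubar0 = real L ^ (2 * k) * mubar0"

definition Afree :: "nat \<Rightarrow> nat \<Rightarrow> real \<Rightarrow> real \<Rightarrow> (int^'d::finite \<Rightarrow> real) \<Rightarrow> int^'d \<Rightarrow> real" where
  "Afree L k a mubar0 g x = - lap L k g x + mubar_k L k mubar0 * g x
      + a_k L k a * Qk_adj L k (Qk L k g) x"

definition AOm :: "nat \<Rightarrow> nat \<Rightarrow> nat \<Rightarrow> real \<Rightarrow> real \<Rightarrow> (int^'d::finite \<Rightarrow> real) \<Rightarrow> int^'d \<Rightarrow> real" where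
  "AOm L m k a mubar0 g x = - lapN L m k g x + mubar_k L k mubar0 * g x
      + a_k L k a * QOmk_adj L k (QOmk L m k g) x"

text \<open>Kernel G_k(x,w) = <delta_x, G_k delta_w> = (G_k delta_w)(x), where G_k delta_w is the
  unique L^2(eta Z^d) solution g of (-Delta + mubar_k + a_k Q_k^* Q_k) g = delta_w.\<close>
definition Gfree :: "nat \<Rightarrow> nat \<Rightarrow> real \<Rightarrow> real \<Rightarrow> int^'d::finite \<Rightarrow> int^'d \<Rightarrow> real" where
  "Gfree L k a mubar0 x w =
     (THE g. (\<lambda>z. (g z)\<^sup>2) summable_on UNIV \<and>
             (\<forall>z. Afree L k a mubar0 g z = delta_pt L k TYPE('d) w z)) x"

text \<open>Kernel G_k(Omega)(x,y) = (G_k(Omega) delta_y)(x), where G_k(Omega) delta_y is the unique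
  function g on Omega (extended by 0 outside Omega) with
  (-Delta_Omega + mubar_k + a_k Q_{Omega,k}^* Q_{Omega,k}) g = delta_y on Omega.\<close>
definition GOm :: "nat \<Rightarrow> nat \<Rightarrow> nat \<Rightarrow> real \<Rightarrow> real \<Rightarrow> int^'d::finite \<Rightarrow> int^'d \<Rightarrow> real" where
  "GOm L m k a mubar0 x y =
     (THE g. (\<forall>z. \<not> inOmega L m z \<longrightarrow> g z = 0) \<and>
             (\<forall>z. inOmega L m z \<longrightarrow> AOm L m k a mubar0 g z = delta_pt L k TYPE('d) y z)) x"

text \<open>Reflections P_mu (across x_mu = -eta/2) and Pbar_mu (across x_mu = (L^m - 1/2) eta)\<close>
definition Pref :: "'d \<Rightarrow> int^'d \<Rightarrow> int^'d" where
  "Pref \<mu> n = (\<chi> i. if i = \<mu> then - 1 - n$i else n$i)"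

definition Pbar :: "nat \<Rightarrow> nat \<Rightarrow> 'd \<Rightarrow> int^'d \<Rightarrow> int^'d" where
  "Pbar L m \<mu> n = (\<chi> i. if i = \<mu> then 2 * int L ^ m - 1 - n$i else n$i)"

text \<open>Orbit of y under the group generated by all P_mu, Pbar_mu (they are involutions,
  so closure under applying generators gives the group orbit).\<close>
inductive_set Img :: "nat \<Rightarrow> nat \<Rightarrow> int^'d \<Rightarrow> (int^'d) set" for L m y where
  base: "y \<in> Img L m y"
| refl1: "w \<in> Img L m y \<Longrightarrow> Pref \<mu> w \<in> Img L m y"
| refl2: "w \<in> Img L m y \<Longrightarrow> Pbar L m \<mu> w \<in> Img L m y"

end

theory Submission imports Defs begin

definition supp :: "('a \<Rightarrow> real) \<Rightarrow> 'a set" where "supp u = {x. u x \<noteq> 0}"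
definition fsum :: "('a \<Rightarrow> real) \<Rightarrow> real" where "fsum u = sum u (supp u)"

lemma fsum_eq: assumes "finite F" "\<And>x. u x \<noteq> 0 \<Longrightarrow> x \<in> F" shows "fsum u = sum u F"
  unfolding fsum_def using assms by (intro sum.mono_neutral_left) (auto simp: supp_def)

lemma finite_suppI: assumes "finite F" "\<And>x. u x \<noteq> 0 \<Longrightarrow> x \<in> F" shows "finite (supp u)"
  using assms by (metis (mono_tags, lifting) finite_subset mem_Collect_eq subsetI supp_def)

lemma supp_iff: "x \<in> supp u \<longleftrightarrow> u x \<noteq> 0" by (simp add: supp_def)

lemma fsum_add: assumes "finite (supp u)" "finite (supp v)"
  shows "fsum (\<lambda>x. u x + v x) = fsum u + fsum v"
proof -
  let ?F = "supp u \<union> supp v"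
  have "fsum (\<lambda>x. u x + v x) = sum (\<lambda>x. u x + v x) ?F"
    by (rule fsum_eq) (use assms in \<open>auto simp: supp_def\<close>)
  also have "\<dots> = sum u ?F + sum v ?F" by (simp add: sum.distrib)
  also have "sum u ?F = fsum u" by (rule fsum_eq[symmetric]) (use assms in \<open>auto simp: supp_def\<close>)
  also have "sum v ?F = fsum v" by (rule fsum_eq[symmetric]) (use assms in \<open>auto simp: supp_def\<close>)
  finally show ?thesis .
qed

lemma fsum_diff: assumes "finite (supp u)" "finite (supp v)"
  shows "fsum (\<lambda>x. u x - v x) = fsum u - fsum v"
proof -
  let ?F = "supp u \<union> supp v"
  have "fsum (\<lambda>x. u x - v x) = sum (\<lambda>x. u x - v x) ?F"
    by (rule fsum_eq) (use assms in \<open>auto simp: supp_def\<close>)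
  also have "\<dots> = sum u ?F - sum v ?F" by (simp add: sum_subtractf)
  also have "sum u ?F = fsum u" by (rule fsum_eq[symmetric]) (use assms in \<open>auto simp: supp_def\<close>)
  also have "sum v ?F = fsum v" by (rule fsum_eq[symmetric]) (use assms in \<open>auto simp: supp_def\<close>)
  finally show ?thesis .
qed

lemma fsum_cmult: assumes "finite (supp u)" shows "fsum (\<lambda>x. c * u x) = c * fsum u"
proof -
  have "fsum (\<lambda>x. c * u x) = sum (\<lambda>x. c * u x) (supp u)"
    by (rule fsum_eq) (use assms in \<open>auto simp: supp_def\<close>)
  then show ?thesis by (simp add: fsum_def sum_distrib_left)
qed

lemma fsum_mono: assumes "finite (supp u)" "finite (supp v)" "\<And>x. u x \<le> v x"
  shows "fsum u \<le> fsum v"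
proof -
  let ?F = "supp u \<union> supp v"
  have "fsum u = sum u ?F" by (rule fsum_eq) (use assms in \<open>auto simp: supp_def\<close>)
  also have "\<dots> \<le> sum v ?F" by (rule sum_mono) (use assms in auto)
  also have "\<dots> = fsum v" by (rule fsum_eq[symmetric]) (use assms in \<open>auto simp: supp_def\<close>)
  finally show ?thesis .
qed

lemma fsum_nonneg: assumes "\<And>x. 0 \<le> u x" shows "0 \<le> fsum u"
  unfolding fsum_def by (rule sum_nonneg) (use assms in auto)

lemma fsum_sum: assumes "finite I" "\<And>i. i \<in> I \<Longrightarrow> finite (supp (u i))"
  shows "fsum (\<lambda>x. \<Sum>i\<in>I. u i x) = (\<Sum>i\<in>I. fsum (u i))"
proof -
  let ?F = "\<Union>i\<in>I. supp (u i)"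
  have fin: "finite ?F" using assms by auto
  have "fsum (\<lambda>x. \<Sum>i\<in>I. u i x) = (\<Sum>x\<in>?F. \<Sum>i\<in>I. u i x)"
  proof (rule fsum_eq[OF fin])
    fix x assume "(\<Sum>i\<in>I. u i x) \<noteq> 0"
    then obtain i where "i \<in> I" "u i x \<noteq> 0" by (meson sum.neutral)
    then show "x \<in> ?F" by (auto simp: supp_def)
  qed
  also have "\<dots> = (\<Sum>i\<in>I. \<Sum>x\<in>?F. u i x)" by (rule sum.swap)
  also have "\<dots> = (\<Sum>i\<in>I. fsum (u i))"
  proof (rule sum.cong[OF refl])
    fix i assume "i \<in> I"
    then show "(\<Sum>x\<in>?F. u i x) = fsum (u i)"
      by (intro fsum_eq[symmetric] fin) (auto simp: supp_def)
  qed
  finally show ?thesis .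
qed

lemma fsum_reindex: assumes "bij p" shows "fsum (\<lambda>x. u (p x)) = fsum u"
proof -
  have s: "supp (\<lambda>x. u (p x)) = p -` supp u" by (auto simp: supp_def)
  have "bij_betw p (p -` supp u) (supp u)"
    using assms unfolding bij_betw_def bij_def by (auto intro: inj_on_subset simp: image_vimage_eq)
  then have "sum (\<lambda>x. u (p x)) (p -` supp u) = sum u (supp u)" by (rule sum.reindex_bij_betw)
  then show ?thesis by (simp add: fsum_def s)
qed

lemma fsum_single: "fsum (\<lambda>x. if x = y then c else 0) = c"
  by (subst fsum_eq[of "{y}"]) (auto split: if_splits)

lemma fsum_le_single: assumes "finite (supp u)" "\<And>x. 0 \<le> u x" shows "u y \<le> fsum u"
proof (cases "u y = 0")
  case True then show ?thesis using fsum_nonneg[of u] assms(2) by simp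
next
  case False
  then have "y \<in> supp u" by (simp add: supp_def)
  then show ?thesis unfolding fsum_def using assms by (intro member_le_sum) auto
qed

lemma vec_set_eq: "{z::'a^'d. \<forall>i. z$i \<in> S i} = vec_lambda ` PiE UNIV S"
proof (intro set_eqI iffI)
  fix z :: "'a^'d" assume "z \<in> {z. \<forall>i. z$i \<in> S i}"
  then have "(\<lambda>i. z$i) \<in> PiE UNIV S" by auto
  moreover have "z = vec_lambda (\<lambda>i. z$i)" by simp
  ultimately show "z \<in> vec_lambda ` PiE UNIV S" by blast
qed auto

lemma inj_vec_lambda: "inj vec_lambda"
  by (rule injI) (metis vec_lambda_inverse UNIV_I vec_lambda_inject)

lemma finite_vecset: assumes "\<And>i. finite (S i)" shows "finite {z::'a^'d::finite. \<forall>i. z$i \<in> S i}"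
  unfolding vec_set_eq using assms by (intro finite_imageI finite_PiE) auto

lemma card_vecset: assumes "\<And>i. finite (S i)"
  shows "card {z::'a^'d::finite. \<forall>i. z$i \<in> S i} = (\<Prod>i\<in>UNIV. card (S i))"
  unfolding vec_set_eq
  by (subst card_image) (auto intro: inj_on_subset[OF inj_vec_lambda] simp: card_PiE assms)

lemma sum_vecset: assumes "\<And>i. finite (S i)"
  shows "(\<Sum>z\<in>{z::'a^'d::finite. \<forall>i. z$i \<in> S i}. f z) = (\<Sum>g\<in>PiE UNIV S. f (vec_lambda g))"
  unfolding vec_set_eq
  by (subst sum.reindex) (auto intro: inj_on_subset[OF inj_vec_lambda])

definition cube :: "int^'d \<Rightarrow> int \<Rightarrow> (int^'d) set" where
  "cube w r = {z. \<forall>i. \<bar>z$i - w$i\<bar> \<le> r}"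

lemma cube_vecset: "cube w r = {z. \<forall>i. z$i \<in> {w$i - r .. w$i + r}}"
  unfolding cube_def by (auto simp: abs_le_iff; smt (verit))

lemma finite_cube[simp]: "finite (cube (w::int^'d::finite) r)"
  unfolding cube_vecset by (rule finite_vecset) auto

lemma mem_cube_sym: "z \<in> cube x r \<longleftrightarrow> x \<in> cube z r"
  unfolding cube_def by (auto simp: abs_minus_commute)

lemma cube_trans: "z \<in> cube x r \<Longrightarrow> x \<in> cube w s \<Longrightarrow> z \<in> cube w (r + s)"
proof -
  assume a: "z \<in> cube x r" "x \<in> cube w s"
  have "\<bar>z$i - w$i\<bar> \<le> r + s" for i
  proof -
    have "\<bar>z$i - x$i\<bar> \<le> r" "\<bar>x$i - w$i\<bar> \<le> s" using a unfolding cube_def by auto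
    then show ?thesis by linarith
  qed
  then show ?thesis unfolding cube_def by auto
qed

lemma cube_center: "r \<ge> 0 \<Longrightarrow> x \<in> cube x r" unfolding cube_def by auto

lemma cube_mono: "r \<le> s \<Longrightarrow> cube x r \<subseteq> cube x s" unfolding cube_def
  using order_trans by blast

lemma cube_translate: "cube x r = (\<lambda>y. x + y) ` cube 0 r"
proof (intro set_eqI iffI)
  fix z assume "z \<in> cube x r"
  then have "z - x \<in> cube 0 r" "z = x + (z - x)" by (auto simp: cube_def)
  then show "z \<in> (\<lambda>y. x + y) ` cube 0 r" by blast
qed (auto simp: cube_def)

lemma bij_plus: "bij (\<lambda>x::'a::ab_group_add. x + y)"
  by (rule bij_betwI[of _ _ _ "\<lambda>x. x - y"]) auto

lemma bij_plus': "bij (\<lambda>x::'a::ab_group_add. y + x)"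
  by (rule bij_betwI[of _ _ _ "\<lambda>x. x - y"]) auto

lemma bij_minus': "bij (\<lambda>x::'a::ab_group_add. y - x)"
  by (rule bij_betwI[of _ _ _ "\<lambda>x. y - x"]) auto

lemma sum_cube_translate: "(\<Sum>z\<in>cube x r. f z) = (\<Sum>y\<in>cube 0 r. f (x + y))"
  by (subst cube_translate, subst sum.reindex) (auto simp: inj_on_def)

lemma finite_supp_near: assumes "finite S" "\<And>x. f x \<noteq> 0 \<Longrightarrow> \<exists>z\<in>S. x \<in> cube z r"
  shows "finite (supp f)"
  by (rule finite_suppI[of "\<Union>z\<in>S. cube z r"]) (use assms in auto)

lemma finite_bounded_cube: assumes "finite (F :: (int^'d::finite) set)" shows "\<exists>R\<ge>0. F \<subseteq> cube 0 R"
proof -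
  let ?R = "Max (insert 0 {\<bar>z$i\<bar> | z i. z \<in> F})"
  have fin: "finite {\<bar>z$i\<bar> | z i. z \<in> F}"
  proof -
    have "{\<bar>z$i\<bar> | z i. z \<in> F} = (\<lambda>(z,i). \<bar>z$i\<bar>) ` (F \<times> UNIV)" by auto
    then show ?thesis using assms by simp
  qed
  have "\<forall>z\<in>F. \<forall>i. \<bar>z$i\<bar> \<le> ?R" using fin by (auto intro!: Max_ge)
  moreover have "?R \<ge> 0" using fin by (auto intro!: Max_ge)
  ultimately show ?thesis unfolding cube_def by auto
qed

lemma sh_nth: "sh n \<mu> s $ i = (if i = \<mu> then n$i + s else n$i)" by (simp add: sh_def)

lemma sh_sh: "sh (sh x \<mu> s) \<mu> t = sh x \<mu> (s + t)"
  by (simp add: sh_def vec_eq_iff)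

lemma sh_0[simp]: "sh x \<mu> 0 = x" by (simp add: sh_def vec_eq_iff)

lemma bij_sh: "bij (\<lambda>x. sh x \<mu> s)"
  by (rule bij_betwI[of _ _ _ "\<lambda>x. sh x \<mu> (-s)"]) (auto simp: sh_sh)

lemma sh_inv: "z = sh x \<mu> s \<longleftrightarrow> x = sh z \<mu> (-s)"
  by (auto simp: sh_sh)

lemma sh_in_cube: "\<bar>s\<bar> \<le> r \<Longrightarrow> sh x \<mu> s \<in> cube x r"
  unfolding cube_def by (auto simp: sh_nth)

lemma sh_plus: "sh (x + y) \<mu> s = sh x \<mu> s + y" by (simp add: sh_def vec_eq_iff)

definition dec :: "real \<Rightarrow> int^'d::finite \<Rightarrow> real" where
  "dec r z = (\<Prod>i\<in>UNIV. r ^ nat \<bar>z$i\<bar>)"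

lemma dec_nonneg: "0 \<le> r \<Longrightarrow> 0 \<le> dec r z" unfolding dec_def by (auto intro: prod_nonneg)

lemma dec_le1: "0 \<le> r \<Longrightarrow> r \<le> 1 \<Longrightarrow> dec r z \<le> 1"
  unfolding dec_def by (auto intro!: prod_le_1 power_le_one)

lemma sum_int_interval_bound:
  fixes r :: real
  assumes "0 \<le> r" "r < 1"
  shows "(\<Sum>j\<in>{-int n..int n}. r ^ nat \<bar>j\<bar>) \<le> 2 * (\<Sum>i<Suc n. r ^ i)"
proof (induction n)
  case 0 then show ?case using assms by simp
next
  case (Suc n)
  have eq: "{-int (Suc n)..int (Suc n)} = insert (-int (Suc n)) (insert (int (Suc n)) {-int n..int n})"
    by auto
  have "(\<Sum>j\<in>{-int (Suc n)..int (Suc n)}. r ^ nat \<bar>j\<bar>) = r ^ Suc n + r ^ Suc n + (\<Sum>j\<in>{-int n..int n}. r ^ nat \<bar>j\<bar>)"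
  proof -
    have [simp]: "nat (int n + 1) = Suc n" "nat (1 + int n) = Suc n" by auto
    show ?thesis unfolding eq by (subst sum.insert; simp)+
  qed
  also have "\<dots> \<le> 2 * r ^ Suc n + 2 * (\<Sum>i<Suc n. r ^ i)" using Suc by simp
  also have "\<dots> = 2 * (\<Sum>i<Suc (Suc n). r ^ i)" by simp
  finally show ?case .
qed

lemma sum_int_interval_bound2:
  fixes r :: real
  assumes "0 \<le> r" "r < 1"
  shows "(\<Sum>j\<in>{-int n..int n}. r ^ nat \<bar>j\<bar>) \<le> 2 / (1 - r)"
proof -
  have "(\<Sum>i<Suc n. r ^ i) = (1 - r ^ Suc n) / (1 - r)"
    using assms by (subst sum_gp_strict) auto
  also have "\<dots> \<le> 1 / (1 - r)" using assms by (intro divide_right_mono) auto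
  finally show ?thesis using sum_int_interval_bound[OF assms, of n] by (simp add: field_simps)
qed

lemma dec_sum_bound: fixes r :: real and F :: "(int^'a::finite) set"
  assumes "0 \<le> r" "r < 1" "finite F"
  shows "sum (dec r) F \<le> (2 / (1 - r)) ^ CARD('a)"
proof -
    obtain R where R: "R \<ge> 0" "F \<subseteq> cube 0 R" using finite_bounded_cube assms by blast
    define n where "n = nat R"
    have Rn: "R = int n" using R n_def by simp
    have "sum (dec r) F \<le> sum (dec r) (cube (0::int^'a) R)"
    proof (rule sum_mono2)
      show "finite (cube 0 R)" by simp
      show "F \<subseteq> cube 0 R" using R by simp
      show "0 \<le> dec r b" for b using assms by (simp add: dec_nonneg)
    qed
    also have "\<dots> = (\<Sum>g\<in>PiE (UNIV::'a set) (\<lambda>_. {-int n..int n}). \<Prod>i\<in>UNIV. r ^ nat \<bar>g i\<bar>)"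
      unfolding cube_vecset Rn by (subst sum_vecset) (auto simp: dec_def)
    also have "\<dots> = (\<Prod>i\<in>(UNIV::'a set). \<Sum>j\<in>{-int n..int n}. r ^ nat \<bar>j\<bar>)"
      by (subst prod_sum_PiE) auto
    also have "\<dots> \<le> (\<Prod>i\<in>(UNIV::'a set). 2 / (1 - r))"
      by (intro prod_mono conjI sum_nonneg sum_int_interval_bound2 assms) (use assms in auto)
    also have "\<dots> = (2 / (1 - r)) ^ CARD('a)" by simp
    finally show ?thesis .
qed

lemma dec_summable: fixes r :: real assumes "0 \<le> r" "r < 1" shows "(dec r :: int^'a::finite \<Rightarrow> real) summable_on UNIV"
proof (rule nonneg_bdd_above_summable_on)
  fix x :: "int^'a" show "0 \<le> dec r x" by (rule dec_nonneg) (use assms in simp)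
next
  have "sum (dec r) F \<le> (2 / (1 - r)) ^ CARD('a)" if "finite F" for F :: "(int^'a) set"
    using dec_sum_bound assms that by blast
  then show "bdd_above (sum (dec r :: int^'a \<Rightarrow> real) ` {F. F \<subseteq> UNIV \<and> finite F})"
    by (intro bdd_aboveI2[where M = "(2 / (1 - r)) ^ CARD('a)"]) auto
qed


lemma div_iff_int: assumes "(e::int) > 0" shows "z div e = b \<longleftrightarrow> e*b \<le> z \<and> z < e*b + e"
proof -
  have "(z + (-b) * e) div e = -b + z div e" using assms by (intro div_mult_self1) simp
  then have "(z - e*b) div e = z div e - b" by (simp add: algebra_simps)
  then have "z div e = b \<longleftrightarrow> (z - e*b) div e = 0" by simp
  also have "\<dots> \<longleftrightarrow> 0 \<le> z - e*b \<and> z - e*b < e" using assms by (auto simp: zdiv_eq_0_iff)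
  finally show ?thesis by auto
qed

lemma div_refl_int: assumes "(e::int) > 0" "e dvd c" shows "(c - 1 - z) div e = c div e - 1 - z div e"
proof -
  obtain q where c: "c = e * q" using assms by auto
  define t where "t = z div e"
  have t: "e*t \<le> z" "z < e*t + e" using div_iff_int[OF assms(1), of z t] t_def by auto
  have eq: "e*(q - 1 - t) = e*q - e - e*t" by (simp add: algebra_simps)
  have "(c - 1 - z) div e = q - 1 - t"
    unfolding div_iff_int[OF assms(1)] c eq using t by linarith
  moreover have "c div e = q" using c assms(1) by simp
  ultimately show ?thesis using t_def by simp
qed

lemma fs_mult1: "finite (supp f) \<Longrightarrow> finite (supp (\<lambda>x. f x * g x))"
  by (rule finite_suppI[of "supp f"]) (auto simp: supp_def)
lemma fs_mult2: "finite (supp g) \<Longrightarrow> finite (supp (\<lambda>x. f x * g x))"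
  by (rule finite_suppI[of "supp g"]) (auto simp: supp_def)
lemma fs_add: "finite (supp f) \<Longrightarrow> finite (supp g) \<Longrightarrow> finite (supp (\<lambda>x. f x + g x))"
  by (rule finite_suppI[of "supp f \<union> supp g"]) (auto simp: supp_def)
lemma fs_diff: "finite (supp f) \<Longrightarrow> finite (supp g) \<Longrightarrow> finite (supp (\<lambda>x. f x - g x))"
  by (rule finite_suppI[of "supp f \<union> supp g"]) (auto simp: supp_def)
lemma fs_pow2: "finite (supp f) \<Longrightarrow> finite (supp (\<lambda>x. (f x)\<^sup>2))"
  by (rule finite_suppI[of "supp f"]) (auto simp: supp_def)
lemma fs_bij: assumes "bij p" "finite (supp f)" shows "finite (supp (\<lambda>x. f (p x)))"
proof -
  have "supp (\<lambda>x. f (p x)) = p -` supp f" by (auto simp: supp_def)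
  moreover have "finite (p -` supp f)" using assms by (intro finite_vimageI) (auto simp: bij_def)
  ultimately show ?thesis by simp
qed
lemma fs_sum: "finite I \<Longrightarrow> (\<And>i. i \<in> I \<Longrightarrow> finite (supp (f i))) \<Longrightarrow> finite (supp (\<lambda>x. \<Sum>i\<in>I. f i x))"
  by (rule finite_suppI[of "\<Union>i\<in>I. supp (f i)"]) (auto simp: supp_def dest: sum.not_neutral_contains_not_neutral)

lemma kernel_supp:
  assumes "finite (supp u)" "\<And>x z. z \<notin> cube x r \<Longrightarrow> K x z = 0"
  shows "finite (supp (\<lambda>x. \<Sum>z\<in>cube x r. K x z * u z))"
proof (rule finite_supp_near[of "supp u" _ r])
  fix x assume "(\<Sum>z\<in>cube x r. K x z * u z) \<noteq> 0"
  then obtain z where "z \<in> cube x r" "K x z * u z \<noteq> 0" by (meson sum.not_neutral_contains_not_neutral)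
  then show "\<exists>z\<in>supp u. x \<in> cube z r" by (auto simp: supp_def mem_cube_sym)
qed (use assms in auto)

lemma gsym:
  fixes K :: "int^'d::finite \<Rightarrow> int^'d \<Rightarrow> real"
  assumes sym: "\<And>x z. K x z = K z x" and rng: "\<And>x z. z \<notin> cube x r \<Longrightarrow> K x z = 0"
    and fu: "finite (supp u)"
  shows "fsum (\<lambda>x. u x * (\<Sum>z\<in>cube x r. K x z * v z)) = fsum (\<lambda>x. (\<Sum>z\<in>cube x r. K x z * u z) * v x)"
proof -
  define S where "S = supp u"
  define W where "W = (\<Union>x\<in>S. cube x r)"
  have finS: "finite S" using fu S_def by simp
  have finW: "finite W" using finS W_def by auto
  have uS: "\<And>x. x \<notin> S \<Longrightarrow> u x = 0" by (simp add: S_def supp_def)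
  have "fsum (\<lambda>x. u x * (\<Sum>z\<in>cube x r. K x z * v z)) = (\<Sum>x\<in>S. u x * (\<Sum>z\<in>cube x r. K x z * v z))"
    by (rule fsum_eq) (use finS S_def in \<open>auto simp: supp_def\<close>)
  also have "\<dots> = (\<Sum>x\<in>S. u x * (\<Sum>z\<in>W. K x z * v z))"
  proof (rule sum.cong[OF refl])
    fix x assume x: "x \<in> S"
    have "(\<Sum>z\<in>cube x r. K x z * v z) = (\<Sum>z\<in>W. K x z * v z)"
      by (rule sum.mono_neutral_left) (use x finW rng in \<open>auto simp: W_def\<close>)
    then show "u x * (\<Sum>z\<in>cube x r. K x z * v z) = u x * (\<Sum>z\<in>W. K x z * v z)" by simp
  qed
  also have "\<dots> = (\<Sum>x\<in>S. \<Sum>z\<in>W. u x * K x z * v z)" by (simp add: sum_distrib_left mult.assoc)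
  also have "\<dots> = (\<Sum>z\<in>W. \<Sum>x\<in>S. u x * K x z * v z)" by (rule sum.swap)
  also have "\<dots> = (\<Sum>z\<in>W. (\<Sum>x\<in>S. K z x * u x) * v z)"
    by (simp add: sum_distrib_right sum_distrib_left sym mult_ac)
  also have "\<dots> = (\<Sum>z\<in>W. (\<Sum>x\<in>cube z r. K z x * u x) * v z)"
  proof (rule sum.cong[OF refl])
    fix z assume "z \<in> W"
    have "(\<Sum>x\<in>cube z r. K z x * u x) = (\<Sum>x\<in>cube z r \<union> S. K z x * u x)"
      by (rule sum.mono_neutral_left) (use finS rng in simp_all)
    also have "\<dots> = (\<Sum>x\<in>S. K z x * u x)"
      by (rule sum.mono_neutral_right) (use finS uS in simp_all)
    finally show "(\<Sum>x\<in>S. K z x * u x) * v z = (\<Sum>x\<in>cube z r. K z x * u x) * v z" by simp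
  qed
  also have "\<dots> = fsum (\<lambda>x. (\<Sum>z\<in>cube x r. K x z * u z) * v x)"
  proof (rule fsum_eq[symmetric, OF finW])
    fix x assume "(\<Sum>z\<in>cube x r. K x z * u z) * v x \<noteq> 0"
    then have "(\<Sum>z\<in>cube x r. K x z * u z) \<noteq> 0" by auto
    then obtain z where "z \<in> cube x r" "K x z * u z \<noteq> 0" by (meson sum.not_neutral_contains_not_neutral)
    then have "z \<in> cube x r" "u z \<noteq> 0" by auto
    then show "x \<in> W" by (auto simp: W_def S_def supp_def mem_cube_sym)
  qed
  finally show ?thesis .
qed


locale GS =
  fixes L m k :: nat and a mubar0 :: real
  assumes oddL: "odd L" and L1: "L > 1" and k1: "k \<ge> 1" and mgek: "m \<ge> k"
    and a0: "0 < a" and a1: "a \<le> 1" and mu0: "mubar0 \<ge> 0"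
begin

abbreviation el :: int where "el \<equiv> int L ^ k"
abbreviation e2 :: real where "e2 \<equiv> eta L k powi (-2)"
abbreviation mk :: real where "mk \<equiv> mubar_k L k mubar0"
abbreviation ak :: real where "ak \<equiv> a_k L k a"

lemma el_pos: "el > 0" using L1 by simp
lemma el_ge1: "el \<ge> 1" using L1 by (simp add: one_le_power)
lemma e2_pos: "e2 > 0" using L1 by (simp add: eta_def)
lemma mk_nonneg: "mk \<ge> 0" using mu0 by (simp add: mubar_k_def)
lemma ak_pos: "ak > 0"
proof -
  have L: "real L > 1" using L1 by simp
  have i1: "inverse (real L) < 1" using L by (simp add: inverse_less_1_iff)
  have i0: "inverse (real L) > 0" using L by simp
  have "real L powi (-2) = inverse (real L) ^ 2" by (simp add: power_int_def)
  moreover have "real L powi (- 2 * int k) = inverse (real L) ^ (2 * k)"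
    by (simp add: power_int_def nat_mult_distrib)
  moreover have "inverse (real L) ^ 2 < 1" using i0 i1 by (simp add: power_less_one_iff)
  moreover have "inverse (real L) ^ (2*k) < 1" using i0 i1 k1 by (simp add: power_less_one_iff)
  ultimately show ?thesis using a0 by (simp add: a_k_def)
qed

lemma blkof_nth: "blkof L k z $ i = z$i div el" by (simp add: blkof_def)

lemma Blk_iff: "z \<in> Blk L k b \<longleftrightarrow> blkof L k z = b"
  unfolding Blk_def blkof_def vec_eq_iff using div_iff_int[OF el_pos] by auto

lemma Blk_vecset: "Blk L k b = {z. \<forall>i. z$i \<in> {el * b$i ..< el * b$i + el}}"
  by (auto simp: Blk_def)

lemma finite_Blk[simp]: "finite (Blk L k (b::int^'d::finite))"
  unfolding Blk_vecset by (rule finite_vecset) auto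

lemma card_Blk: "card (Blk L k (b::int^'d::finite)) = (L^k)^CARD('d)"
  unfolding Blk_vecset by (subst card_vecset) (auto simp: nat_power_eq)

lemma cBlk: "(1 / real L ^ k) ^ CARD('d) * real (card (Blk L k (b::int^'d::finite))) = 1"
  using L1 by (simp add: card_Blk power_divide power_mult[symmetric] mult.commute)

lemma Blk_cube: assumes "blkof L k z = blkof L k x" shows "z \<in> cube x el"
proof -
  have "z \<in> Blk L k (blkof L k x)" "x \<in> Blk L k (blkof L k x)" using assms Blk_iff by auto
  then have "\<bar>z$i - x$i\<bar> \<le> el" for i
  proof -
    assume h: "z \<in> Blk L k (blkof L k x)" "x \<in> Blk L k (blkof L k x)"
    have "el * blkof L k x $ i \<le> z$i" "z$i < el * blkof L k x $ i + el"
         "el * blkof L k x $ i \<le> x$i" "x$i < el * blkof L k x $ i + el"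
      using h unfolding Blk_def by auto
    then show ?thesis by linarith
  qed
  then show ?thesis unfolding cube_def by auto
qed

definition nbr :: "int^'d::finite \<Rightarrow> int^'d \<Rightarrow> real" where
  "nbr x z = (\<Sum>\<mu>\<in>UNIV. (if z = sh x \<mu> 1 then 1 else 0) + (if z = sh x \<mu> (-1) then 1 else 0))"

definition Pk :: "int^'d::finite \<Rightarrow> int^'d \<Rightarrow> real" where
  "Pk x z = (1 / real L ^ k) ^ CARD('d) * (if blkof L k z = blkof L k x then 1 else 0)"

definition Kf :: "int^'d::finite \<Rightarrow> int^'d \<Rightarrow> real" where
  "Kf x z = e2 * (2 * real CARD('d) * (if z = x then 1 else 0) - nbr x z)
     + mk * (if z = x then 1 else 0) + ak * Pk x z"

lemma nbr_sym: "nbr x z = nbr z x"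
  unfolding nbr_def
proof (rule sum.cong[OF refl])
  fix \<mu>
  have e1: "(z = sh x \<mu> 1) = (x = sh z \<mu> (-1))" using sh_inv[of z x \<mu> 1] by simp
  have e2: "(z = sh x \<mu> (-1)) = (x = sh z \<mu> 1)" using sh_inv[of z x \<mu> "-1"] by simp
  show "(if z = sh x \<mu> 1 then 1 else 0) + (if z = sh x \<mu> (-1) then 1 else 0) =
    ((if x = sh z \<mu> 1 then 1 else 0) + (if x = sh z \<mu> (-1) then 1 else 0) :: real)"
    unfolding e1 e2 by (simp add: add.commute)
qed

lemma Pk_sym: "Pk x z = Pk z x" by (auto simp: Pk_def)

lemma Kf_sym: "Kf x z = Kf z x" by (auto simp: Kf_def nbr_sym Pk_sym)

lemma nbr_rng: "z \<notin> cube x el \<Longrightarrow> nbr x z = 0"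
  unfolding nbr_def using sh_in_cube[of 1 el x] sh_in_cube[of "-1" el x] el_ge1
  by (intro sum.neutral) auto

lemma Pk_rng: "z \<notin> cube x el \<Longrightarrow> Pk x z = 0"
  unfolding Pk_def using Blk_cube by auto

lemma Kf_rng: assumes "z \<notin> cube x el" shows "Kf x z = 0"
proof -
  have "x \<in> cube x el" by (rule cube_center) (use el_pos in simp)
  then have "z \<noteq> x" using assms by auto
  then show ?thesis unfolding Kf_def using nbr_rng[OF assms] Pk_rng[OF assms] by simp
qed

lemma nbr_bounds: "0 \<le> nbr x z" "nbr x z \<le> 2 * real CARD('d)" for x z :: "int^'d::finite"
proof -
  show "0 \<le> nbr x z" unfolding nbr_def by (intro sum_nonneg) auto
  have "nbr x z \<le> (\<Sum>\<mu>\<in>(UNIV::'d set). 2)" unfolding nbr_def by (intro sum_mono) auto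
  then show "nbr x z \<le> 2 * real CARD('d)" by simp
qed

lemma Pk_bounds: "0 \<le> Pk x z" "Pk x z \<le> 1"
proof -
  have "(1 / real L ^ k) ^ CARD('a) \<le> 1" using L1 by (intro power_le_one) (auto simp: field_simps one_le_power)
  then show "0 \<le> Pk x z" "Pk x z \<le> 1" for x z :: "int^'a::finite" by (auto simp: Pk_def)
qed

definition Bk :: "'d::finite itself \<Rightarrow> real" where "Bk _ = e2 * (4 * real CARD('d)) + mk + ak"

lemma Kf_bound: "\<bar>Kf x z\<bar> \<le> Bk TYPE('d)" for x z :: "int^'d::finite"
proof -
  have "\<bar>2 * real CARD('d) * (if z = x then 1 else 0) - nbr x z\<bar> \<le> 4 * real CARD('d)"
    using nbr_bounds[of x z] by (auto simp: abs_le_iff)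
  then have "\<bar>e2 * (2 * real CARD('d) * (if z = x then 1 else 0) - nbr x z)\<bar> \<le> e2 * (4 * real CARD('d))"
    using e2_pos by (simp add: abs_mult)
  moreover have "\<bar>mk * (if z = x then 1 else 0)\<bar> \<le> mk" using mk_nonneg by auto
  moreover have "\<bar>ak * Pk x z\<bar> \<le> ak" using ak_pos Pk_bounds[of x z] by (simp add: abs_mult)
  ultimately show ?thesis unfolding Kf_def Bk_def by linarith
qed

lemma Pi_eq: "Qk_adj L k (Qk L k u) x = (\<Sum>z\<in>cube x el. Pk x z * u z)"
proof -
  have "Qk_adj L k (Qk L k u) x = (\<Sum>z\<in>Blk L k (blkof L k x). (1 / real L ^ k) ^ CARD('a) * u z)"
    by (simp add: Qk_adj_def Qk_def)
  also have "Blk L k (blkof L k x) = {z \<in> cube x el. blkof L k z = blkof L k x}"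
    using Blk_cube Blk_iff by auto
  also have "(\<Sum>z\<in>\<dots>. (1 / real L ^ k) ^ CARD('a) * u z) = (\<Sum>z\<in>cube x el. Pk x z * u z)"
    by (subst sum.inter_filter) (auto simp: Pk_def intro!: sum.cong)
  finally show ?thesis .
qed

lemma sum_ind: assumes "finite A" "p \<in> A" shows "(\<Sum>z\<in>A. (if z = p then 1 else 0) * g z) = (g p :: real)"
proof -
  have "(\<Sum>z\<in>A. (if z = p then 1 else 0) * g z) = (\<Sum>z\<in>A. if z = p then g z else 0)"
    by (rule sum.cong) auto
  also have "\<dots> = g p" using assms by (simp add: sum.delta)
  finally show ?thesis .
qed

lemma nbr_sum: "(\<Sum>z\<in>cube x el. nbr x z * g z) = (\<Sum>\<mu>\<in>UNIV. g (sh x \<mu> 1) + g (sh x \<mu> (-1)))"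
proof -
  have "(\<Sum>z\<in>cube x el. nbr x z * g z)
     = (\<Sum>z\<in>cube x el. \<Sum>\<mu>\<in>UNIV. (if z = sh x \<mu> 1 then 1 else 0) * g z + (if z = sh x \<mu> (-1) then 1 else 0) * g z)"
    unfolding nbr_def by (intro sum.cong refl) (simp add: sum_distrib_left sum_distrib_right algebra_simps)
  also have "\<dots> = (\<Sum>\<mu>\<in>UNIV. \<Sum>z\<in>cube x el. (if z = sh x \<mu> 1 then 1 else 0) * g z + (if z = sh x \<mu> (-1) then 1 else 0) * g z)"
    by (rule sum.swap)
  also have "\<dots> = (\<Sum>\<mu>\<in>UNIV. g (sh x \<mu> 1) + g (sh x \<mu> (-1)))"
    using sh_in_cube[of 1 el x] sh_in_cube[of "-1" el x] el_ge1
    by (simp add: sum.distrib sum_ind)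
  finally show ?thesis .
qed

lemma lap_eq: "lap L k g x = e2 * ((\<Sum>\<mu>\<in>UNIV. g (sh x \<mu> 1) + g (sh x \<mu> (-1))) - 2 * real CARD('d) * g x)"
  for x :: "int^'d::finite"
proof -
  have "(\<Sum>\<mu>\<in>(UNIV::'d set). g (sh x \<mu> 1) - 2 * g x + g (sh x \<mu> (-1)))
      = (\<Sum>\<mu>\<in>UNIV. g (sh x \<mu> 1) + g (sh x \<mu> (-1))) - (\<Sum>\<mu>\<in>(UNIV::'d set). 2 * g x)"
    unfolding sum_subtractf[symmetric] by (rule sum.cong) (auto simp: algebra_simps)
  then show ?thesis by (simp add: lap_def)
qed

lemma Afree_K: "Afree L k a mubar0 g x = (\<Sum>z\<in>cube x el. Kf x z * g z)"
proof -
  have fin: "finite (cube x el)" by simp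
  have xin: "x \<in> cube x el" by (rule cube_center) (use el_pos in simp)
  have "(\<Sum>z\<in>cube x el. Kf x z * g z)
     = e2 * (2 * real CARD('a) * (\<Sum>z\<in>cube x el. (if z = x then 1 else 0) * g z) - (\<Sum>z\<in>cube x el. nbr x z * g z))
       + mk * (\<Sum>z\<in>cube x el. (if z = x then 1 else 0) * g z) + ak * (\<Sum>z\<in>cube x el. Pk x z * g z)"
    unfolding Kf_def by (simp add: algebra_simps sum.distrib sum_subtractf sum_distrib_left)
  also have "\<dots> = e2 * (2 * real CARD('a) * g x - (\<Sum>\<mu>\<in>UNIV. g (sh x \<mu> 1) + g (sh x \<mu> (-1))))
       + mk * g x + ak * Qk_adj L k (Qk L k g) x"
    by (simp add: sum_ind[OF fin xin] nbr_sum Pi_eq)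
  also have "\<dots> = Afree L k a mubar0 g x"
  proof -
    define S where "S = (\<Sum>\<mu>\<in>UNIV. g (sh x \<mu> 1) + g (sh x \<mu> (-1)))"
    have "lap L k g x = e2 * (S - 2 * real CARD('a) * g x)" unfolding S_def by (rule lap_eq)
    then show ?thesis unfolding S_def[symmetric] Afree_def by (simp add: algebra_simps)
  qed
  finally show ?thesis by simp
qed

end

lemma fs_sh: "finite (supp u) \<Longrightarrow> finite (supp (\<lambda>x. u (sh x \<mu> s)))"
  by (rule fs_bij[OF bij_sh])

lemma fs_tr: fixes u :: "int^'d::finite \<Rightarrow> real" shows "finite (supp u) \<Longrightarrow> finite (supp (\<lambda>x. u (x + y)))"
  by (rule fs_bij[OF bij_plus])

lemma fs_cmult: "finite (supp u) \<Longrightarrow> finite (supp (\<lambda>x. c * u x))"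
  by (rule fs_mult2)

lemma sq_bound_sqrt: assumes "d\<^sup>2 \<le> (E::real)" shows "\<bar>d\<bar> \<le> sqrt E"
  using real_sqrt_le_mono[OF assms] by simp

context GS begin

abbreviation Pi :: "(int^'d::finite \<Rightarrow> real) \<Rightarrow> int^'d \<Rightarrow> real" where
  "Pi u x \<equiv> Qk_adj L k (Qk L k u) x"

definition Dir :: "(int^'d::finite \<Rightarrow> real) \<Rightarrow> real" where
  "Dir u = (\<Sum>\<mu>\<in>(UNIV::'d set). fsum (\<lambda>x. (u (sh x \<mu> 1) - u x)\<^sup>2))"

lemma Dir_nonneg: "0 \<le> Dir u" unfolding Dir_def by (intro sum_nonneg fsum_nonneg) auto

lemma fs_A: "finite (supp u) \<Longrightarrow> finite (supp (\<lambda>x. Afree L k a mubar0 u x))"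
  unfolding Afree_K by (rule kernel_supp) (auto simp: Kf_rng)

lemma fs_Pi: "finite (supp u) \<Longrightarrow> finite (supp (\<lambda>x. Pi u x))"
  unfolding Pi_eq by (rule kernel_supp) (auto simp: Pk_rng)

lemma lapform: fixes u :: "int^'d::finite \<Rightarrow> real" assumes fu: "finite (supp u)"
  shows "fsum (\<lambda>x. u x * (2 * real CARD('d) * u x - (\<Sum>\<mu>\<in>UNIV. u (sh x \<mu> 1) + u (sh x \<mu> (-1))))) = Dir u"
    (is "fsum ?L = _")
proof -
  define f where "f \<mu> x = 2 * (u x)\<^sup>2 - u x * u (sh x \<mu> 1) - u x * u (sh x \<mu> (-1))" for \<mu> :: 'd and x
  have pt: "?L x = (\<Sum>\<mu>\<in>UNIV. f \<mu> x)" for x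
  proof -
    define S1 where "S1 = (\<Sum>\<mu>\<in>(UNIV::'d set). u (sh x \<mu> 1))"
    define S2 where "S2 = (\<Sum>\<mu>\<in>(UNIV::'d set). u (sh x \<mu> (-1)))"
    have e1: "(\<Sum>\<mu>\<in>UNIV. u (sh x \<mu> 1) + u (sh x \<mu> (-1))) = S1 + S2"
      unfolding S1_def S2_def by (rule sum.distrib)
    have "(\<Sum>\<mu>\<in>UNIV. f \<mu> x) = (\<Sum>\<mu>\<in>(UNIV::'d set). 2 * (u x)\<^sup>2) - (\<Sum>\<mu>\<in>UNIV. u x * u (sh x \<mu> 1))
         - (\<Sum>\<mu>\<in>UNIV. u x * u (sh x \<mu> (-1)))"
      unfolding f_def by (simp only: sum_subtractf)
    also have "\<dots> = real CARD('d) * (2 * (u x)\<^sup>2) - u x * S1 - u x * S2"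
      unfolding S1_def S2_def by (simp add: sum_distrib_left)
    finally have e2: "(\<Sum>\<mu>\<in>UNIV. f \<mu> x) = real CARD('d) * (2 * (u x)\<^sup>2) - u x * S1 - u x * S2" .
    show ?thesis unfolding e1 e2 by (simp add: algebra_simps power2_eq_square)
  qed
  have fsh: "finite (supp (\<lambda>x. u (sh x \<mu> s)))" for \<mu> s using fs_sh[OF fu] .
  have each: "fsum (f \<mu>) = fsum (\<lambda>x. (u (sh x \<mu> 1) - u x)\<^sup>2)" for \<mu>
  proof -
    define A where "A x = (u x)\<^sup>2" for x
    define B where "B x = u x * u (sh x \<mu> 1)" for x
    define C where "C x = u x * u (sh x \<mu> (-1))" for x
    define D where "D x = (u (sh x \<mu> 1))\<^sup>2" for x
    have fA: "finite (supp A)" unfolding A_def by (rule fs_pow2[OF fu])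
    have fB: "finite (supp B)" unfolding B_def by (rule fs_mult1[OF fu])
    have fC: "finite (supp C)" unfolding C_def by (rule fs_mult1[OF fu])
    have fD: "finite (supp D)" unfolding D_def by (rule fs_pow2[OF fsh])
    have f2A: "finite (supp (\<lambda>x. 2 * A x))" by (rule fs_cmult[OF fA])
    have f2B: "finite (supp (\<lambda>x. 2 * B x))" by (rule fs_cmult[OF fB])
    have r1: "fsum C = fsum B"
    proof -
      have "fsum C = fsum (\<lambda>y. C (sh y \<mu> 1))"
        by (rule fsum_reindex[OF bij_sh, symmetric])
      also have "(\<lambda>y. C (sh y \<mu> 1)) = B" unfolding B_def C_def by (simp add: sh_sh mult.commute)
      finally show ?thesis .
    qed
    have r2: "fsum D = fsum A" unfolding A_def D_def by (rule fsum_reindex[OF bij_sh])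
    have "f \<mu> = (\<lambda>x. (2 * A x - B x) - C x)" unfolding f_def A_def B_def C_def by simp
    then have "fsum (f \<mu>) = fsum (\<lambda>x. 2 * A x - B x) - fsum C"
      using fsum_diff[OF fs_diff[OF f2A fB] fC] by simp
    also have "fsum (\<lambda>x. 2 * A x - B x) = 2 * fsum A - fsum B"
      using fsum_diff[OF f2A fB] fsum_cmult[OF fA] by simp
    finally have L: "fsum (f \<mu>) = 2 * fsum A - fsum B - fsum C" .
    have "(\<lambda>x. (u (sh x \<mu> 1) - u x)\<^sup>2) = (\<lambda>x. (D x - 2 * B x) + A x)"
      unfolding A_def B_def D_def by (simp add: power2_diff algebra_simps)
    then have "fsum (\<lambda>x. (u (sh x \<mu> 1) - u x)\<^sup>2) = fsum (\<lambda>x. D x - 2 * B x) + fsum A"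
      using fsum_add[OF fs_diff[OF fD f2B] fA] by simp
    also have "fsum (\<lambda>x. D x - 2 * B x) = fsum D - 2 * fsum B"
      using fsum_diff[OF fD f2B] fsum_cmult[OF fB] by simp
    finally show ?thesis using L r1 r2 by simp
  qed
  have ff: "finite (supp (f \<mu>))" for \<mu>
    unfolding f_def by (intro fs_diff fs_mult1 fs_cmult fs_pow2 fu)
  have "fsum ?L = fsum (\<lambda>x. \<Sum>\<mu>\<in>UNIV. f \<mu> x)" using pt by presburger
  also have "\<dots> = (\<Sum>\<mu>\<in>UNIV. fsum (f \<mu>))" by (rule fsum_sum) (use ff in auto)
  also have "\<dots> = Dir u" unfolding Dir_def using each by simp
  finally show ?thesis .
qed

lemma Pi_idem: "Pi (\<lambda>z. Pi u z) x = Pi u x"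
proof -
  have "Pi (\<lambda>z. Pi u z) x = (\<Sum>z\<in>Blk L k (blkof L k x). (1 / real L ^ k) ^ CARD('a) * Qk L k u (blkof L k z))"
    by (simp add: Qk_adj_def Qk_def)
  also have "\<dots> = (\<Sum>z\<in>Blk L k (blkof L k x). (1 / real L ^ k) ^ CARD('a) * Qk L k u (blkof L k x))"
    by (rule sum.cong) (auto simp: Blk_iff)
  also have "\<dots> = ((1 / real L ^ k) ^ CARD('a) * real (card (Blk L k (blkof L k x)))) * Qk L k u (blkof L k x)"
    by simp
  also have "\<dots> = Pi u x" by (simp add: cBlk Qk_adj_def)
  finally show ?thesis .
qed

lemma Pi_form: assumes fu: "finite (supp u)"
  shows "fsum (\<lambda>x. u x * Pi u x) = fsum (\<lambda>x. (Pi u x)\<^sup>2)"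
proof -
  have "fsum (\<lambda>x. Pi u x * (\<Sum>z\<in>cube x el. Pk x z * u z)) = fsum (\<lambda>x. (\<Sum>z\<in>cube x el. Pk x z * Pi u z) * u x)"
    by (rule gsym[OF Pk_sym Pk_rng fs_Pi[OF fu]])
  then have "fsum (\<lambda>x. Pi u x * Pi u x) = fsum (\<lambda>x. Pi (\<lambda>z. Pi u z) x * u x)"
    unfolding Pi_eq[symmetric] .
  then show ?thesis unfolding Pi_idem by (simp add: power2_eq_square mult.commute)
qed

lemma Afree_split: "Afree L k a mubar0 u x
  = e2 * (2 * real CARD('d) * u x - (\<Sum>\<mu>\<in>UNIV. u (sh x \<mu> 1) + u (sh x \<mu> (-1)))) + mk * u x + ak * Pi u x"
  for x :: "int^'d::finite"
proof -
  define S where "S = (\<Sum>\<mu>\<in>UNIV. u (sh x \<mu> 1) + u (sh x \<mu> (-1)))"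
  have "lap L k u x = e2 * (S - 2 * real CARD('d) * u x)" unfolding S_def by (rule lap_eq)
  then show ?thesis unfolding S_def[symmetric] Afree_def by (simp add: algebra_simps)
qed

lemma quadform: fixes u :: "int^'d::finite \<Rightarrow> real" assumes fu: "finite (supp u)"
  shows "fsum (\<lambda>x. u x * Afree L k a mubar0 u x) = e2 * Dir u + mk * fsum (\<lambda>x. (u x)\<^sup>2) + ak * fsum (\<lambda>x. (Pi u x)\<^sup>2)"
proof -
  define T where "T x = u x * (2 * real CARD('d) * u x - (\<Sum>\<mu>\<in>UNIV. u (sh x \<mu> 1) + u (sh x \<mu> (-1))))" for x
  have fT: "finite (supp T)" unfolding T_def by (rule fs_mult1[OF fu])
  have "(\<lambda>x. u x * Afree L k a mubar0 u x) = (\<lambda>x. e2 * T x + mk * (u x)\<^sup>2 + ak * (u x * Pi u x))"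
    unfolding Afree_split T_def by (auto simp: algebra_simps power2_eq_square)
  then have "fsum (\<lambda>x. u x * Afree L k a mubar0 u x) = e2 * fsum T + mk * fsum (\<lambda>x. (u x)\<^sup>2) + ak * fsum (\<lambda>x. u x * Pi u x)"
    using fT fu
    by (simp add: fsum_add fs_add fs_cmult fs_pow2 fs_mult1 fsum_cmult)
  also have "fsum T = Dir u" unfolding T_def by (rule lapform[OF fu])
  also have "fsum (\<lambda>x. u x * Pi u x) = fsum (\<lambda>x. (Pi u x)\<^sup>2)" by (rule Pi_form[OF fu])
  finally show ?thesis .
qed

end

definition btw :: "int^'d::finite \<Rightarrow> int^'d \<Rightarrow> int^'d \<Rightarrow> bool" where
  "btw x z p \<longleftrightarrow> (\<forall>i. (x$i \<le> p$i \<and> p$i \<le> z$i) \<or> (z$i \<le> p$i \<and> p$i \<le> x$i))"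

lemma card_cube_translate: "card (cube (x::int^'d::finite) r) = card (cube (0::int^'d::finite) r)"
proof -
  have "cube x r = (\<lambda>y. x + y) ` cube 0 r" by (rule cube_translate)
  moreover have "inj_on (\<lambda>y. x + y) (cube (0::int^'d) r)" by (auto simp: inj_on_def)
  ultimately show ?thesis by (simp add: card_image)
qed

context GS begin

definition Eu :: "(int^'d::finite \<Rightarrow> real) \<Rightarrow> int^'d \<Rightarrow> real" where
  "Eu u x = (\<Sum>y\<in>cube 0 el. \<Sum>\<mu>\<in>UNIV. (u (sh (x + y) \<mu> 1) - u (x + y))\<^sup>2)"

lemma Eu_nonneg: "0 \<le> Eu u x" unfolding Eu_def by (intro sum_nonneg) auto

lemma Eu_term: assumes "y \<in> cube 0 el" shows "(u (sh (x + y) \<mu> 1) - u (x + y))\<^sup>2 \<le> Eu u x"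
proof -
  have "(u (sh (x + y) \<mu> 1) - u (x + y))\<^sup>2 \<le> (\<Sum>\<mu>\<in>UNIV. (u (sh (x + y) \<mu> 1) - u (x + y))\<^sup>2)"
    by (rule member_le_sum) auto
  also have "\<dots> \<le> Eu u x" unfolding Eu_def
    by (rule member_le_sum[of y "cube 0 el" "\<lambda>y. \<Sum>\<mu>\<in>UNIV. (u (sh (x + y) \<mu> 1) - u (x + y))\<^sup>2"])
       (use assms in \<open>auto intro: sum_nonneg\<close>)
  finally show ?thesis .
qed

lemma edge: assumes "btw x z q" "\<forall>j. \<bar>z$j - x$j\<bar> \<le> el"
  shows "\<bar>u (sh q i 1) - u q\<bar> \<le> sqrt (Eu u x)"
proof -
  have "q - x \<in> cube 0 el" unfolding cube_def
  proof (intro CollectI allI)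
    fix j
    have "\<bar>q$j - x$j\<bar> \<le> \<bar>z$j - x$j\<bar>" using assms(1) unfolding btw_def by (smt (verit))
    moreover have "\<bar>z$j - x$j\<bar> \<le> el" using assms(2) by simp
    ultimately show "\<bar>(q - x)$j - 0$j\<bar> \<le> el" by simp
  qed
  from Eu_term[of "q - x" u x i, OF this] have "(u (sh q i 1) - u q)\<^sup>2 \<le> Eu u x" by simp
  then show ?thesis by (rule sq_bound_sqrt)
qed

lemma path:
  fixes u :: "int^'d::finite \<Rightarrow> real"
  assumes H: "\<forall>j. \<bar>z$j - x$j\<bar> \<le> el"
  shows "btw x z p \<Longrightarrow> nat (\<Sum>i\<in>UNIV. \<bar>z$i - p$i\<bar>) = n \<Longrightarrow> \<bar>u p - u z\<bar> \<le> real n * sqrt (Eu u x)"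
proof (induction n arbitrary: p)
  case 0
  have "(\<Sum>i\<in>UNIV. \<bar>z$i - p$i\<bar>) \<le> 0" using 0(2) by simp
  moreover have "0 \<le> (\<Sum>i\<in>UNIV. \<bar>z$i - p$i\<bar>)" by (intro sum_nonneg) auto
  ultimately have "(\<Sum>i\<in>UNIV. \<bar>z$i - p$i\<bar>) = 0" by linarith
  then have "\<forall>i\<in>UNIV. \<bar>z$i - p$i\<bar> = 0" using sum_nonneg_eq_0_iff[of UNIV "\<lambda>i. \<bar>z$i - p$i\<bar>"] by simp
  then have "p = z" by (simp add: vec_eq_iff)
  then show ?case by simp
next
  case (Suc n)
  define S where "S = (\<Sum>i\<in>UNIV. \<bar>z$i - p$i\<bar>)"
  have S: "S = int (Suc n)" using Suc.prems(2) S_def by simp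
  then obtain i where i: "z$i \<noteq> p$i"
    by (metis (mono_tags, lifting) S_def abs_eq_0 diff_self of_nat_eq_0_iff nat.distinct(1) sum.neutral)
  define s where "s = (if p$i < z$i then 1 else -1 :: int)"
  define p' where "p' = sh p i s"
  have p'nth: "p'$j = (if j = i then p$j + s else p$j)" for j by (simp add: p'_def sh_nth)
  have btw': "btw x z p'"
    using Suc.prems(1) i unfolding btw_def p'nth s_def by (smt (verit))
  have abs': "\<bar>z$j - p'$j\<bar> = \<bar>z$j - p$j\<bar> - (if j = i then 1 else 0)" for j
    using i unfolding p'nth s_def by auto
  have "(\<Sum>j\<in>UNIV. \<bar>z$j - p'$j\<bar>) = S - (\<Sum>j\<in>(UNIV::'d set). if j = i then 1 else 0)"
    unfolding abs' S_def by (simp add: sum_subtractf)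
  also have "\<dots> = int n" using S by simp
  finally have "nat (\<Sum>j\<in>UNIV. \<bar>z$j - p'$j\<bar>) = n" by simp
  from Suc.IH[OF btw' this] have ih: "\<bar>u p' - u z\<bar> \<le> real n * sqrt (Eu u x)" .
  have ed: "\<bar>u p - u p'\<bar> \<le> sqrt (Eu u x)"
  proof (cases "p$i < z$i")
    case True
    then have "p' = sh p i 1" by (simp add: p'_def s_def)
    then show ?thesis using edge[OF Suc.prems(1) H, of u i] by (simp add: abs_minus_commute)
  next
    case False
    then have "p' = sh p i (-1)" by (simp add: p'_def s_def)
    then have "sh p' i 1 = p" by (simp add: sh_sh)
    then show ?thesis using edge[OF btw' H, of u i] by simp
  qed
  have "\<bar>u p - u z\<bar> \<le> \<bar>u p - u p'\<bar> + \<bar>u p' - u z\<bar>" by linarith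
  also have "\<dots> \<le> sqrt (Eu u x) + real n * sqrt (Eu u x)" using ih ed by linarith
  also have "\<dots> = real (Suc n) * sqrt (Eu u x)" by (simp add: algebra_simps)
  finally show ?case .
qed

lemma poinc_pt:
  fixes u :: "int^'d::finite \<Rightarrow> real"
  assumes "blkof L k z = blkof L k x"
  shows "\<bar>u x - u z\<bar> \<le> real CARD('d) * real_of_int el * sqrt (Eu u x)"
proof -
  have H: "\<forall>j. \<bar>z$j - x$j\<bar> \<le> el" using Blk_cube[OF assms] unfolding cube_def by simp
  have b: "btw x z x" unfolding btw_def by auto
  define S where "S = (\<Sum>i\<in>UNIV. \<bar>z$i - x$i\<bar>)"
  have S0: "S \<ge> 0" unfolding S_def by (intro sum_nonneg) auto
  have h1: "\<bar>u x - u z\<bar> \<le> real (nat S) * sqrt (Eu u x)" using path[OF H b] S_def by blast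
  have "real (nat S) = real_of_int S" using S0 by simp
  also have "real_of_int S \<le> real CARD('d) * real_of_int el"
  proof -
    have "S \<le> (\<Sum>i\<in>(UNIV::'d set). el)" unfolding S_def using H by (intro sum_mono) auto
    then have "S \<le> int CARD('d) * el" by simp
    then show ?thesis by (metis of_int_le_iff of_int_mult of_int_of_nat_eq)
  qed
  finally have "real (nat S) * sqrt (Eu u x) \<le> real CARD('d) * real_of_int el * sqrt (Eu u x)"
    by (rule mult_right_mono) (simp add: Eu_nonneg)
  then show ?thesis using h1 by linarith
qed

lemma poinc_Pi:
  fixes u :: "int^'d::finite \<Rightarrow> real"
  shows "\<bar>u x - Pi u x\<bar> \<le> real CARD('d) * real_of_int el * sqrt (Eu u x)"
proof -
  define c where "c = (1 / real L ^ k) ^ CARD('d)"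
  define B where "B = real CARD('d) * real_of_int el * sqrt (Eu u x)"
  define Bl where "Bl = Blk L k (blkof L k x)"
  have c0: "c \<ge> 0" using c_def by simp
  have cB: "c * real (card Bl) = 1" unfolding c_def Bl_def by (rule cBlk)
  have P: "Pi u x = (\<Sum>z\<in>Bl. c * u z)" by (simp add: Qk_adj_def Qk_def c_def Bl_def)
  have "(\<Sum>z\<in>Bl. c * u x) = (c * real (card Bl)) * u x" by (simp add: mult_ac)
  then have U: "u x = (\<Sum>z\<in>Bl. c * u x)" using cB by simp
  have "u x - Pi u x = (\<Sum>z\<in>Bl. c * (u x - u z))"
    unfolding P by (subst U) (simp add: sum_subtractf algebra_simps)
  also have "\<bar>\<dots>\<bar> \<le> (\<Sum>z\<in>Bl. \<bar>c * (u x - u z)\<bar>)" by (rule sum_abs)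
  also have "\<dots> \<le> (\<Sum>z\<in>Bl. c * B)"
  proof (rule sum_mono)
    fix z assume "z \<in> Bl"
    then have "blkof L k z = blkof L k x" unfolding Bl_def by (simp add: Blk_iff)
    then have "\<bar>u x - u z\<bar> \<le> B" unfolding B_def by (rule poinc_pt)
    then show "\<bar>c * (u x - u z)\<bar> \<le> c * B" using c0 by (simp add: abs_mult mult_left_mono)
  qed
  also have "\<dots> = B" using cB by (simp add: mult.commute mult.left_commute)
  finally show ?thesis unfolding B_def .
qed

definition Pc :: "'d::finite itself \<Rightarrow> real" where
  "Pc _ = 2 * (real CARD('d) * real_of_int el)\<^sup>2 * real (card (cube (0::int^'d) el))"

lemma Pc_pos: "Pc TYPE('d::finite) > 0"
proof -
  have "(0::int^'d) \<in> cube 0 el" by (rule cube_center) (use el_pos in simp)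
  then have "card (cube (0::int^'d) el) > 0" by (auto simp: card_gt_0_iff)
  then show ?thesis unfolding Pc_def using el_pos by simp
qed

lemma fsum_Eu: fixes u :: "int^'d::finite \<Rightarrow> real" assumes fu: "finite (supp u)"
  shows "finite (supp (Eu u))" "fsum (Eu u) = real (card (cube (0::int^'d) el)) * Dir u"
proof -
  define g where "g \<mu> x = (u (sh x \<mu> 1) - u x)\<^sup>2" for \<mu> :: 'd and x
  have gg: "g \<mu> = (\<lambda>x. (u (sh x \<mu> 1) - u x)\<^sup>2)" for \<mu> by (rule ext) (simp add: g_def)
  have fg: "finite (supp (g \<mu>))" for \<mu> unfolding g_def by (intro fs_pow2 fs_diff fs_sh fu)
  have fgy: "finite (supp (\<lambda>x. g \<mu> (x + y)))" for \<mu> y by (rule fs_tr[OF fg])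
  have fgs: "finite (supp (\<lambda>x. \<Sum>\<mu>\<in>UNIV. g \<mu> (x + y)))" for y by (rule fs_sum) (use fgy in auto)
  have E: "Eu u = (\<lambda>x. \<Sum>y\<in>cube 0 el. \<Sum>\<mu>\<in>UNIV. g \<mu> (x + y))" unfolding Eu_def g_def by simp
  show "finite (supp (Eu u))" unfolding E by (rule fs_sum) (use fgs in auto)
  have "fsum (Eu u) = (\<Sum>y\<in>cube 0 el. fsum (\<lambda>x. \<Sum>\<mu>\<in>UNIV. g \<mu> (x + y)))"
    unfolding E by (rule fsum_sum) (use fgs in auto)
  also have "\<dots> = (\<Sum>y\<in>cube (0::int^'d) el. \<Sum>\<mu>\<in>UNIV. fsum (\<lambda>x. g \<mu> (x + y)))"
    by (rule sum.cong[OF refl], rule fsum_sum) (use fgy in auto)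
  also have "\<dots> = (\<Sum>y\<in>cube (0::int^'d) el. \<Sum>\<mu>\<in>UNIV. fsum (g \<mu>))"
    by (simp add: fsum_reindex[OF bij_plus])
  also have "\<dots> = real (card (cube (0::int^'d) el)) * Dir u" by (simp add: Dir_def gg)
  finally show "fsum (Eu u) = real (card (cube (0::int^'d) el)) * Dir u" .
qed

lemma poincare: fixes u :: "int^'d::finite \<Rightarrow> real" assumes fu: "finite (supp u)"
  shows "fsum (\<lambda>x. (u x)\<^sup>2) \<le> 2 * fsum (\<lambda>x. (Pi u x)\<^sup>2) + Pc TYPE('d) * Dir u"
proof -
  define B where "B = real CARD('d) * real_of_int el"
  have pt: "(u x)\<^sup>2 \<le> 2 * (Pi u x)\<^sup>2 + 2 * B\<^sup>2 * Eu u x" for x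
  proof -
    have "\<bar>u x - Pi u x\<bar> \<le> B * sqrt (Eu u x)" using poinc_Pi[of u x] B_def by simp
    then have "\<bar>u x - Pi u x\<bar>\<^sup>2 \<le> (B * sqrt (Eu u x))\<^sup>2" by (rule power_mono) simp
    then have "(u x - Pi u x)\<^sup>2 \<le> B\<^sup>2 * Eu u x" using Eu_nonneg[of u x] by (simp add: power_mult_distrib)
    moreover have "(u x)\<^sup>2 \<le> 2 * (Pi u x)\<^sup>2 + 2 * (u x - Pi u x)\<^sup>2"
      using zero_le_power2[of "u x - 2 * Pi u x"] by (simp add: power2_eq_square algebra_simps)
    ultimately show ?thesis by linarith
  qed
  have fP: "finite (supp (\<lambda>x. (Pi u x)\<^sup>2))" by (intro fs_pow2 fs_Pi fu)
  have fE: "finite (supp (Eu u))" using fsum_Eu[OF fu] by simp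
  have fE2: "finite (supp (\<lambda>x. 2 * B\<^sup>2 * Eu u x))" using fs_cmult[OF fE] by simp
  have fP2: "finite (supp (\<lambda>x. 2 * (Pi u x)\<^sup>2))" using fs_cmult[OF fP] by simp
  have "fsum (\<lambda>x. (u x)\<^sup>2) \<le> fsum (\<lambda>x. 2 * (Pi u x)\<^sup>2 + 2 * B\<^sup>2 * Eu u x)"
    by (rule fsum_mono[OF fs_pow2[OF fu] fs_add[OF fP2 fE2] pt])
  also have "\<dots> = 2 * fsum (\<lambda>x. (Pi u x)\<^sup>2) + 2 * B\<^sup>2 * fsum (Eu u)"
    using fsum_add[OF fP2 fE2] fsum_cmult[OF fP] fsum_cmult[OF fE] by simp
  also have "\<dots> = 2 * fsum (\<lambda>x. (Pi u x)\<^sup>2) + Pc TYPE('d) * Dir u"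
    unfolding fsum_Eu(2)[OF fu] Pc_def B_def by simp
  finally show ?thesis .
qed

definition cco :: "'d::finite itself \<Rightarrow> real" where
  "cco _ = min (ak / 2) (e2 / Pc TYPE('d))"

lemma cco_pos: "cco TYPE('d::finite) > 0"
proof -
  have "Pc TYPE('d) > 0" by (rule Pc_pos)
  then show ?thesis unfolding cco_def using ak_pos e2_pos by simp
qed

lemma coercive: fixes u :: "int^'d::finite \<Rightarrow> real" assumes fu: "finite (supp u)"
  shows "cco TYPE('d) * fsum (\<lambda>x. (u x)\<^sup>2) \<le> fsum (\<lambda>x. u x * Afree L k a mubar0 u x)"
proof -
  define U where "U = fsum (\<lambda>x. (u x)\<^sup>2)"
  define P2 where "P2 = fsum (\<lambda>x. (Pi u x)\<^sup>2)"
  define c where "c = cco TYPE('d)"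
  have U0: "U \<ge> 0" unfolding U_def by (rule fsum_nonneg) simp
  have P0: "P2 \<ge> 0" unfolding P2_def by (rule fsum_nonneg) simp
  have D0: "Dir u \<ge> 0" by (rule Dir_nonneg)
  have c0: "c > 0" unfolding c_def by (rule cco_pos)
  have "c \<le> ak / 2" unfolding c_def cco_def by (rule min.cobounded1)
  then have c1: "2 * c \<le> ak" by linarith
  have Pp: "Pc TYPE('d) > 0" by (rule Pc_pos)
  have "c \<le> e2 / Pc TYPE('d)" unfolding c_def cco_def by (rule min.cobounded2)
  then have c2: "c * Pc TYPE('d) \<le> e2" using Pp by (simp add: pos_le_divide_eq)
  have "c * U \<le> c * (2 * P2 + Pc TYPE('d) * Dir u)"
    using poincare[OF fu] c0 unfolding U_def P2_def by (intro mult_left_mono) auto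
  also have "\<dots> = (2 * c) * P2 + (c * Pc TYPE('d)) * Dir u" by (simp add: algebra_simps)
  also have "\<dots> \<le> ak * P2 + e2 * Dir u"
    using c1 c2 P0 D0 by (intro add_mono mult_right_mono) auto
  also have "\<dots> \<le> e2 * Dir u + mk * U + ak * P2" using mk_nonneg U0 by simp
  also have "\<dots> = fsum (\<lambda>x. u x * Afree L k a mubar0 u x)"
    unfolding quadform[OF fu] U_def P2_def by simp
  finally show ?thesis unfolding c_def U_def .
qed

definition Mop :: "'d::finite itself \<Rightarrow> real" where
  "Mop _ = (real (card (cube (0::int^'d) el)) * Bk TYPE('d))\<^sup>2"

lemma opbound: fixes u :: "int^'d::finite \<Rightarrow> real" assumes fu: "finite (supp u)"
  shows "fsum (\<lambda>x. (Afree L k a mubar0 u x)\<^sup>2) \<le> Mop TYPE('d) * fsum (\<lambda>x. (u x)\<^sup>2)"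
proof -
  define N where "N = real (card (cube (0::int^'d) el))"
  define B where "B = Bk TYPE('d)"
  have pt: "(Afree L k a mubar0 u x)\<^sup>2 \<le> N * B\<^sup>2 * (\<Sum>y\<in>cube 0 el. (u (x + y))\<^sup>2)" for x
  proof -
    have e1: "(Afree L k a mubar0 u x)\<^sup>2 = (\<Sum>z\<in>cube x el. 1 * (Kf x z * u z))\<^sup>2" by (simp add: Afree_K)
    have e2: "(\<Sum>z\<in>cube x el. 1 * (Kf x z * u z))\<^sup>2 \<le> (\<Sum>z\<in>cube x el. 1\<^sup>2) * (\<Sum>z\<in>cube x el. (Kf x z * u z)\<^sup>2)"
      by (rule Cauchy_Schwarz_ineq_sum)
    have e3: "(\<Sum>z\<in>cube x el. (1::real)\<^sup>2) = N" unfolding N_def using card_cube_translate[of x el] by simp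
    have e4: "(\<Sum>z\<in>cube x el. (Kf x z * u z)\<^sup>2) \<le> (\<Sum>z\<in>cube x el. B\<^sup>2 * (u z)\<^sup>2)"
    proof (rule sum_mono)
      fix z
      have "\<bar>Kf x z\<bar>\<^sup>2 \<le> B\<^sup>2" unfolding B_def by (rule power_mono[OF Kf_bound]) simp
      then have "(Kf x z)\<^sup>2 \<le> B\<^sup>2" by simp
      then have "(Kf x z)\<^sup>2 * (u z)\<^sup>2 \<le> B\<^sup>2 * (u z)\<^sup>2" by (rule mult_right_mono) simp
      then show "(Kf x z * u z)\<^sup>2 \<le> B\<^sup>2 * (u z)\<^sup>2" by (simp add: power_mult_distrib)
    qed
    have e5: "(\<Sum>z\<in>cube x el. B\<^sup>2 * (u z)\<^sup>2) = B\<^sup>2 * (\<Sum>y\<in>cube 0 el. (u (x + y))\<^sup>2)"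
      unfolding sum_cube_translate[of _ x el] by (simp add: sum_distrib_left)
    have N0: "N \<ge> 0" unfolding N_def by simp
    have "N * (\<Sum>z\<in>cube x el. (Kf x z * u z)\<^sup>2) \<le> N * (B\<^sup>2 * (\<Sum>y\<in>cube 0 el. (u (x + y))\<^sup>2))"
      using e4 e5 N0 by (intro mult_left_mono) auto
    then show ?thesis using e1 e2 e3 by (simp add: mult.assoc)
  qed
  have fy: "finite (supp (\<lambda>x. (u (x + y))\<^sup>2))" for y by (intro fs_tr fs_pow2 fu)
  have fs: "finite (supp (\<lambda>x. \<Sum>y\<in>cube 0 el. (u (x + y))\<^sup>2))" by (rule fs_sum) (use fy in auto)
  have "fsum (\<lambda>x. (Afree L k a mubar0 u x)\<^sup>2) \<le> fsum (\<lambda>x. N * B\<^sup>2 * (\<Sum>y\<in>cube 0 el. (u (x + y))\<^sup>2))"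
    by (rule fsum_mono[OF fs_pow2[OF fs_A[OF fu]] fs_cmult[OF fs] pt])
  also have "\<dots> = N * B\<^sup>2 * (\<Sum>y\<in>cube (0::int^'d) el. fsum (\<lambda>x. (u (x + y))\<^sup>2))"
    by (simp add: fsum_cmult[OF fs] fsum_sum fy)
  also have "\<dots> = N * B\<^sup>2 * (N * fsum (\<lambda>x. (u x)\<^sup>2))"
    by (simp add: fsum_reindex[OF bij_plus, of "\<lambda>x. (u x)\<^sup>2"] N_def)
  also have "\<dots> = Mop TYPE('d) * fsum (\<lambda>x. (u x)\<^sup>2)" unfolding Mop_def N_def B_def by (simp add: power2_eq_square)
  finally show ?thesis .
qed

end

context GS begin

lemma Bk_pos: "Bk TYPE('d::finite) > 0"
  unfolding Bk_def using e2_pos mk_nonneg ak_pos by (simp add: add_nonneg_pos)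

lemma Mop_pos: "Mop TYPE('d::finite) > 0"
proof -
  have "(0::int^'d) \<in> cube 0 el" by (rule cube_center) (use el_pos in simp)
  then have "card (cube (0::int^'d) el) > 0" by (auto simp: card_gt_0_iff)
  then have "real (card (cube (0::int^'d) el)) * Bk TYPE('d) > 0" using Bk_pos[where 'd='d] by simp
  then show ?thesis unfolding Mop_def by (rule zero_less_power)
qed

definition tt :: "'d::finite itself \<Rightarrow> real" where "tt _ = cco TYPE('d) / Mop TYPE('d)"
definition rho :: "'d::finite itself \<Rightarrow> real" where
  "rho _ = max 0 (1 - (cco TYPE('d))\<^sup>2 / Mop TYPE('d))"

lemma tt_pos: "tt TYPE('d::finite) > 0"
proof -
  have "cco TYPE('d) > 0" "Mop TYPE('d) > 0" by (rule cco_pos, rule Mop_pos)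
  then show ?thesis unfolding tt_def by simp
qed

lemma rho_bounds: "0 \<le> rho TYPE('d::finite)" "rho TYPE('d) < 1"
proof -
  have "cco TYPE('d) > 0" "Mop TYPE('d) > 0" by (rule cco_pos, rule Mop_pos)
  then have "(cco TYPE('d))\<^sup>2 / Mop TYPE('d) > 0" by simp
  then show "0 \<le> rho TYPE('d)" "rho TYPE('d) < 1" unfolding rho_def by auto
qed

definition Tm :: "(int^'d::finite \<Rightarrow> real) \<Rightarrow> int^'d \<Rightarrow> real" where
  "Tm u x = u x - tt TYPE('d) * Afree L k a mubar0 u x"

lemma Tcontr: fixes u :: "int^'d::finite \<Rightarrow> real" assumes fu: "finite (supp u)"
  shows "fsum (\<lambda>x. (Tm u x)\<^sup>2) \<le> rho TYPE('d) * fsum (\<lambda>x. (u x)\<^sup>2)"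
proof -
  define t where "t = tt TYPE('d)"
  define c where "c = cco TYPE('d)"
  define M where "M = Mop TYPE('d)"
  define U where "U = fsum (\<lambda>x. (u x)\<^sup>2)"
  define Q where "Q = fsum (\<lambda>x. u x * Afree L k a mubar0 u x)"
  define A2 where "A2 = fsum (\<lambda>x. (Afree L k a mubar0 u x)\<^sup>2)"
  have M0: "M > 0" unfolding M_def by (rule Mop_pos)
  have c0: "c > 0" unfolding c_def by (rule cco_pos)
  have tdef: "t = c / M" unfolding t_def c_def M_def tt_def by simp
  have t0: "t > 0" using M0 c0 tdef by simp
  have U0: "U \<ge> 0" unfolding U_def by (rule fsum_nonneg) simp
  have cQ: "c * U \<le> Q" unfolding c_def U_def Q_def by (rule coercive[OF fu])
  have A2M: "A2 \<le> M * U" unfolding A2_def M_def U_def by (rule opbound[OF fu])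
  have fA: "finite (supp (\<lambda>x. Afree L k a mubar0 u x))" by (rule fs_A[OF fu])
  have f1: "finite (supp (\<lambda>x. (u x)\<^sup>2))" by (rule fs_pow2[OF fu])
  have f2: "finite (supp (\<lambda>x. 2 * t * (u x * Afree L k a mubar0 u x)))" by (intro fs_cmult fs_mult1 fu)
  have f3: "finite (supp (\<lambda>x. t\<^sup>2 * (Afree L k a mubar0 u x)\<^sup>2))" by (intro fs_cmult fs_pow2 fA)
  have "(\<lambda>x. (Tm u x)\<^sup>2) = (\<lambda>x. ((u x)\<^sup>2 - 2 * t * (u x * Afree L k a mubar0 u x)) + t\<^sup>2 * (Afree L k a mubar0 u x)\<^sup>2)"
    unfolding Tm_def t_def by (rule ext) (simp add: power2_diff algebra_simps power2_eq_square)
  then have "fsum (\<lambda>x. (Tm u x)\<^sup>2) = U - 2 * t * Q + t\<^sup>2 * A2"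
    unfolding U_def Q_def A2_def
    using fsum_add[OF fs_diff[OF f1 f2] f3] fsum_diff[OF f1 f2]
      fsum_cmult[OF fs_mult1[OF fu], of "2 * t" "\<lambda>x. Afree L k a mubar0 u x"]
      fsum_cmult[OF fs_pow2[OF fA], of "t\<^sup>2"]
    by simp
  also have "\<dots> \<le> U - 2 * t * (c * U) + t\<^sup>2 * (M * U)"
  proof -
    have "2 * t * (c * U) \<le> 2 * t * Q" using cQ t0 by simp
    moreover have "t\<^sup>2 * A2 \<le> t\<^sup>2 * (M * U)" using A2M by (intro mult_left_mono) auto
    ultimately show ?thesis by linarith
  qed
  also have "\<dots> = (1 - c\<^sup>2 / M) * U" unfolding tdef using M0 by (simp add: field_simps power2_eq_square)
  also have "\<dots> \<le> rho TYPE('d) * U" unfolding rho_def c_def M_def using U0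
    by (intro mult_right_mono) auto
  finally show ?thesis unfolding U_def .
qed

definition dl :: "int^'d::finite \<Rightarrow> int^'d \<Rightarrow> real" where "dl w z = (if z = w then 1 else 0)"

definition vn :: "int^'d::finite \<Rightarrow> nat \<Rightarrow> int^'d \<Rightarrow> real" where "vn w n = (Tm ^^ n) (dl w)"

lemma vn_0: "vn w 0 = dl w" by (simp add: vn_def)
lemma vn_Suc: "vn w (Suc n) = Tm (vn w n)" by (simp add: vn_def)

lemma vn_supp: "vn w n z \<noteq> 0 \<Longrightarrow> z \<in> cube w (int n * el)"
proof (induction n arbitrary: z)
  case 0 then show ?case by (auto simp: vn_0 dl_def cube_def split: if_splits)
next
  case (Suc n)
  have el0: "el \<ge> 0" using el_pos by simp
  from Suc.prems have "vn w n z \<noteq> 0 \<or> Afree L k a mubar0 (vn w n) z \<noteq> 0"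
    by (auto simp: vn_Suc Tm_def)
  then show ?case
  proof
    assume "vn w n z \<noteq> 0"
    then have "z \<in> cube w (int n * el)" by (rule Suc.IH)
    moreover have "int n * el \<le> int (Suc n) * el" using el0 by (simp add: algebra_simps)
    ultimately show ?thesis using cube_mono by blast
  next
    assume "Afree L k a mubar0 (vn w n) z \<noteq> 0"
    then have "(\<Sum>x\<in>cube z el. Kf z x * vn w n x) \<noteq> 0" by (simp add: Afree_K)
    then obtain x where x: "x \<in> cube z el" "Kf z x * vn w n x \<noteq> 0"
      by (meson sum.not_neutral_contains_not_neutral)
    then have "x \<in> cube w (int n * el)" by (intro Suc.IH) simp
    moreover have "z \<in> cube x el" using x(1) mem_cube_sym by blast
    ultimately have "z \<in> cube w (el + int n * el)" using cube_trans by blast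
    then show ?thesis by (simp add: algebra_simps)
  qed
qed

lemma vn_fin: "finite (supp (vn w n))"
  by (rule finite_suppI[of "cube w (int n * el)"]) (auto intro: vn_supp)

lemma vn_norm: "fsum (\<lambda>z. (vn w n z)\<^sup>2) \<le> rho TYPE('d) ^ n" for w :: "int^'d::finite"
proof (induction n)
  case 0
  have "fsum (\<lambda>z. (vn w 0 z)\<^sup>2) = fsum (\<lambda>z. if z = w then 1 else 0)"
    by (rule arg_cong[where f = fsum]) (auto simp: vn_0 dl_def)
  then show ?case by (simp add: fsum_single)
next
  case (Suc n)
  have "fsum (\<lambda>z. (vn w (Suc n) z)\<^sup>2) \<le> rho TYPE('d) * fsum (\<lambda>z. (vn w n z)\<^sup>2)"
    unfolding vn_Suc by (rule Tcontr[OF vn_fin])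
  also have "\<dots> \<le> rho TYPE('d) * rho TYPE('d) ^ n"
    using Suc rho_bounds(1)[where 'd='d] by (intro mult_left_mono) auto
  finally show ?case by simp
qed

lemma vn_pt: "\<bar>vn w n z\<bar> \<le> sqrt (rho TYPE('d)) ^ n" for w :: "int^'d::finite"
proof -
  have "(vn w n z)\<^sup>2 \<le> fsum (\<lambda>z. (vn w n z)\<^sup>2)"
    by (rule fsum_le_single[OF fs_pow2[OF vn_fin]]) simp
  also have "\<dots> \<le> rho TYPE('d) ^ n" by (rule vn_norm)
  finally have "\<bar>vn w n z\<bar> \<le> sqrt (rho TYPE('d) ^ n)" by (rule sq_bound_sqrt)
  then show ?thesis by (simp add: real_sqrt_power)
qed

definition sg :: "'d::finite itself \<Rightarrow> real" where "sg _ = sqrt (sqrt (rho TYPE('d)))"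
definition N0 :: "'d::finite itself \<Rightarrow> nat" where "N0 _ = nat (int CARD('d) * el)"
definition rr :: "'d::finite itself \<Rightarrow> real" where "rr _ = root (N0 TYPE('d)) (sg TYPE('d))"

lemma sg_bounds: "0 \<le> sg TYPE('d::finite)" "sg TYPE('d) < 1"
  unfolding sg_def using rho_bounds[where 'd='d] by auto

lemma N0_pos: "N0 TYPE('d::finite) > 0"
  unfolding N0_def using el_pos by simp

lemma rr_bounds: "0 \<le> rr TYPE('d::finite)" "rr TYPE('d) < 1"
  unfolding rr_def using sg_bounds[where 'd='d] N0_pos[where 'd='d]
  by (auto intro: real_root_ge_zero)

lemma rr_pow: "rr TYPE('d::finite) ^ N0 TYPE('d) = sg TYPE('d)"
  unfolding rr_def using sg_bounds[where 'd='d] N0_pos[where 'd='d] by simp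

lemma vn_dec: "\<bar>vn w n z\<bar> \<le> sg TYPE('d) ^ n * dec (rr TYPE('d)) (z - w)" for w :: "int^'d::finite"
proof (cases "vn w n z = 0")
  case True then show ?thesis using sg_bounds[where 'd='d] rr_bounds[where 'd='d]
    by (simp add: dec_nonneg)
next
  case False
  define r where "r = rr TYPE('d)"
  define s where "s = sg TYPE('d)"
  have r0: "0 \<le> r" "r \<le> 1" using rr_bounds[where 'd='d] r_def by auto
  have s0: "0 \<le> s" using sg_bounds[where 'd='d] s_def by auto
  have zc: "z \<in> cube w (int n * el)" by (rule vn_supp[OF False])
  have "(\<Sum>i\<in>(UNIV::'d set). nat \<bar>(z - w)$i\<bar>) \<le> (\<Sum>i\<in>(UNIV::'d set). nat (int n * el))"
    using zc unfolding cube_def by (intro sum_mono) (auto intro: nat_mono)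
  also have "\<dots> = N0 TYPE('d) * n" unfolding N0_def using el_pos
    by (simp add: nat_mult_distrib)
  finally have le: "(\<Sum>i\<in>(UNIV::'d set). nat \<bar>(z - w)$i\<bar>) \<le> N0 TYPE('d) * n" .
  have "dec r (z - w) = r ^ (\<Sum>i\<in>(UNIV::'d set). nat \<bar>(z - w)$i\<bar>)" unfolding dec_def by (simp add: power_sum)
  also have "\<dots> \<ge> r ^ (N0 TYPE('d) * n)" using le r0 by (intro power_decreasing) auto
  moreover have "r ^ (N0 TYPE('d) * n) = s ^ n" unfolding r_def s_def by (simp add: power_mult rr_pow)
  ultimately have D: "s ^ n \<le> dec r (z - w)" by simp
  have "\<bar>vn w n z\<bar> \<le> sqrt (rho TYPE('d)) ^ n" by (rule vn_pt)
  also have "sqrt (rho TYPE('d)) = s * s" unfolding s_def sg_def using rho_bounds[where 'd='d]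
    by (simp add: real_sqrt_mult[symmetric])
  also have "(s * s) ^ n = s ^ n * s ^ n" by (simp add: power_mult_distrib)
  also have "\<dots> \<le> s ^ n * dec r (z - w)" using D s0 by (intro mult_left_mono) auto
  finally show ?thesis unfolding r_def s_def .
qed

end

lemma bij_minus_const: "bij (\<lambda>z::'a::ab_group_add. z - w)"
  by (rule bij_betwI[of _ _ _ "\<lambda>z. z + w"]) auto

context GS begin

definition ed :: "'d::finite itself \<Rightarrow> real" where "ed _ = (1 / eta L k) ^ CARD('d)"

lemma ed_pos: "ed TYPE('d::finite) > 0" unfolding ed_def eta_def using L1 by simp

lemma delta_pt_eq: "delta_pt L k TYPE('d) w z = ed TYPE('d) * dl w z" for w z :: "int^'d::finite"
  by (simp add: delta_pt_def ed_def dl_def)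

lemma vn_summable: "summable (\<lambda>n. vn w n z)" for w :: "int^'d::finite"
proof (rule summable_comparison_test'[where N = 0])
  show "summable (\<lambda>n. sqrt (rho TYPE('d)) ^ n)"
    by (rule summable_geometric) (use rho_bounds[where 'd='d] in simp)
  show "norm (vn w n z) \<le> sqrt (rho TYPE('d)) ^ n" for n using vn_pt by simp
qed

definition Gs :: "int^'d::finite \<Rightarrow> int^'d \<Rightarrow> real" where
  "Gs w z = ed TYPE('d) * tt TYPE('d) * suminf (\<lambda>n. vn w n z)"

definition Cg :: "'d::finite itself \<Rightarrow> real" where
  "Cg _ = ed TYPE('d) * tt TYPE('d) / (1 - sg TYPE('d))"

lemma Gs_dec: "\<bar>Gs w z\<bar> \<le> Cg TYPE('d) * dec (rr TYPE('d)) (z - w)" for w :: "int^'d::finite"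
proof -
  define D where "D = dec (rr TYPE('d)) (z - w)"
  define s where "s = sg TYPE('d)"
  have s0: "0 \<le> s" "s < 1" using sg_bounds[where 'd='d] s_def by auto
  have D0: "0 \<le> D" unfolding D_def using rr_bounds[where 'd='d] by (simp add: dec_nonneg)
  have sg1: "summable (\<lambda>n. s ^ n * D)" by (rule summable_mult2, rule summable_geometric) (use s0 in simp)
  have sa: "summable (\<lambda>n. \<bar>vn w n z\<bar>)"
  proof (rule summable_comparison_test'[where N = 0, OF sg1])
    show "norm \<bar>vn w n z\<bar> \<le> s ^ n * D" for n using vn_dec[of w n z] unfolding D_def s_def by simp
  qed
  have "\<bar>suminf (\<lambda>n. vn w n z)\<bar> \<le> (\<Sum>n. \<bar>vn w n z\<bar>)" by (rule summable_rabs[OF sa])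
  also have "\<dots> \<le> (\<Sum>n. s ^ n * D)"
    by (rule suminf_le[OF _ sa sg1]) (use vn_dec[of w _ z] in \<open>simp add: D_def s_def\<close>)
  also have "\<dots> = D / (1 - s)"
    using suminf_mult2[OF summable_geometric[of s], of D] suminf_geometric[of s] s0 by simp
  finally have A: "\<bar>suminf (\<lambda>n. vn w n z)\<bar> \<le> D / (1 - s)" .
  have et: "ed TYPE('d) * tt TYPE('d) > 0" using ed_pos[where 'd='d] tt_pos[where 'd='d] by simp
  have "\<bar>Gs w z\<bar> = ed TYPE('d) * tt TYPE('d) * \<bar>suminf (\<lambda>n. vn w n z)\<bar>"
    unfolding Gs_def using ed_pos[where 'd='d] tt_pos[where 'd='d] by (simp add: abs_mult)
  also have "\<dots> \<le> ed TYPE('d) * tt TYPE('d) * (D / (1 - s))" using A et by (intro mult_left_mono) auto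
  also have "\<dots> = Cg TYPE('d) * D" unfolding Cg_def s_def by simp
  finally show ?thesis unfolding D_def .
qed

lemma Gs_eq: "Afree L k a mubar0 (Gs w) z = delta_pt L k TYPE('d) w z" for w :: "int^'d::finite"
proof -
  define t where "t = tt TYPE('d)"
  have t0: "t > 0" unfolding t_def by (rule tt_pos)
  have ser: "(\<lambda>n. vn w n x) sums (suminf (\<lambda>n. vn w n x))" for x by (rule summable_sums[OF vn_summable])
  have s1: "(\<lambda>n. \<Sum>x\<in>cube z el. Kf z x * vn w n x) sums (\<Sum>x\<in>cube z el. Kf z x * suminf (\<lambda>n. vn w n x))"
    by (rule sums_sum) (rule sums_mult[OF ser])
  have eqn: "(\<Sum>x\<in>cube z el. Kf z x * vn w n x) = (vn w n z - vn w (Suc n) z) / t" for n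
  proof -
    have "vn w (Suc n) z = vn w n z - t * Afree L k a mubar0 (vn w n) z" by (simp add: vn_Suc Tm_def t_def)
    then show ?thesis using t0 by (simp add: Afree_K field_simps)
  qed
  have tel: "(\<lambda>n. vn w n z - vn w (Suc n) z) sums (vn w 0 z - 0)"
    by (rule telescope_sums'[OF summable_LIMSEQ_zero[OF vn_summable]])
  then have "(\<lambda>n. (vn w n z - vn w (Suc n) z) / t) sums ((vn w 0 z - 0) / t)" by (rule sums_divide)
  with s1 have X: "(\<Sum>x\<in>cube z el. Kf z x * suminf (\<lambda>n. vn w n x)) = vn w 0 z / t"
    unfolding eqn by (simp add: sums_unique2)
  have "Afree L k a mubar0 (Gs w) z = (\<Sum>x\<in>cube z el. Kf z x * Gs w x)" by (rule Afree_K)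
  also have "\<dots> = ed TYPE('d) * t * (\<Sum>x\<in>cube z el. Kf z x * suminf (\<lambda>n. vn w n x))"
    unfolding Gs_def t_def by (simp add: sum_distrib_left mult_ac)
  also have "\<dots> = ed TYPE('d) * vn w 0 z" using X t0 by simp
  also have "\<dots> = delta_pt L k TYPE('d) w z" by (simp add: delta_pt_eq vn_0)
  finally show ?thesis .
qed

lemma dec_shift_summable: fixes r :: real assumes "0 \<le> r" "r < 1"
  shows "(\<lambda>z. dec r (z - w)) summable_on (UNIV :: (int^'d::finite) set)"
proof -
  have "bij_betw (\<lambda>z::int^'d. z - w) UNIV UNIV" using bij_minus_const by (simp add: bij_def)
  then show ?thesis using summable_on_reindex_bij_betw dec_summable[OF assms] by blast
qed

lemma Gs_sq_summable: "(\<lambda>z. (Gs w z)\<^sup>2) summable_on UNIV" for w :: "int^'d::finite"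
proof -
  define r where "r = rr TYPE('d)"
  define C where "C = Cg TYPE('d)"
  have r0: "0 \<le> r" "r < 1" using rr_bounds[where 'd='d] r_def by auto
  have S: "(\<lambda>z. C\<^sup>2 * dec r (z - w)) summable_on (UNIV :: (int^'d) set)"
    by (rule summable_on_cmult_right[OF dec_shift_summable[OF r0]])
  show ?thesis
  proof (rule summable_on_comparison_test[OF S])
    fix z
    have D0: "0 \<le> dec r (z - w)" "dec r (z - w) \<le> 1" using r0 by (auto simp: dec_nonneg dec_le1)
    have "\<bar>Gs w z\<bar> \<le> C * dec r (z - w)" using Gs_dec[of w z] unfolding C_def r_def .
    then have "\<bar>Gs w z\<bar>\<^sup>2 \<le> (C * dec r (z - w))\<^sup>2" by (rule power_mono) simp
    also have "\<dots> = C\<^sup>2 * (dec r (z - w) * dec r (z - w))" by (simp add: power2_eq_square)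
    also have "\<dots> \<le> C\<^sup>2 * dec r (z - w)"
      using D0 by (intro mult_left_mono) (auto simp: mult_le_one mult_left_le_one_le)
    finally show "(Gs w z)\<^sup>2 \<le> C\<^sup>2 * dec r (z - w)" by simp
    show "0 \<le> (Gs w z)\<^sup>2" by simp
  qed
qed

lemma Afree_diff: "Afree L k a mubar0 (\<lambda>z. g z - h z) x = Afree L k a mubar0 g x - Afree L k a mubar0 h x"
  unfolding Afree_K by (simp add: sum_subtractf[symmetric] algebra_simps)

lemma uniq0: fixes h :: "int^'d::finite \<Rightarrow> real"
  assumes sh: "(\<lambda>z. (h z)\<^sup>2) summable_on UNIV" and Ah: "\<And>z. Afree L k a mubar0 h z = 0"
  shows "h x = 0"
proof -
  define H where "H = infsum (\<lambda>z. (h z)\<^sup>2) UNIV"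
  define t where "t = tt TYPE('d)"
  have key: "fsum (\<lambda>z. vn x n z * h z) = h x" for n
  proof (induction n)
    case 0
    have "fsum (\<lambda>z. vn x 0 z * h z) = (\<Sum>z\<in>{x}. vn x 0 z * h z)"
      by (rule fsum_eq) (auto simp: vn_0 dl_def split: if_splits)
    then show ?case by (simp add: vn_0 dl_def)
  next
    case (Suc n)
    define v where "v = vn x n"
    have fv: "finite (supp v)" unfolding v_def by (rule vn_fin)
    have "fsum (\<lambda>z. Afree L k a mubar0 v z * h z) = fsum (\<lambda>z. v z * Afree L k a mubar0 h z)"
      unfolding Afree_K using gsym[where K = Kf and r = el and u = v and v = h, OF Kf_sym Kf_rng fv] by simp
    also have "\<dots> = 0" by (simp add: Ah fsum_def)
    finally have z: "fsum (\<lambda>z. Afree L k a mubar0 v z * h z) = 0" .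
    have "(\<lambda>z. vn x (Suc n) z * h z) = (\<lambda>z. v z * h z - t * (Afree L k a mubar0 v z * h z))"
      unfolding v_def t_def by (rule ext) (simp add: vn_Suc Tm_def algebra_simps)
    then have "fsum (\<lambda>z. vn x (Suc n) z * h z) = fsum (\<lambda>z. v z * h z) - t * fsum (\<lambda>z. Afree L k a mubar0 v z * h z)"
      using fsum_diff[OF fs_mult1[OF fv] fs_cmult[OF fs_mult1[OF fs_A[OF fv]]]]
        fsum_cmult[OF fs_mult1[OF fs_A[OF fv]], of t h] by simp
    then show ?case using z Suc.IH v_def by simp
  qed
  have bound: "(h x)\<^sup>2 \<le> rho TYPE('d) ^ n * H" for n
  proof -
    define S where "S = supp (vn x n)"
    have fS: "finite S" unfolding S_def by (rule vn_fin)
    have "h x = (\<Sum>z\<in>S. vn x n z * h z)"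
      using key[of n] fsum_eq[OF fS, of "\<lambda>z. vn x n z * h z"] unfolding S_def supp_def by auto
    then have "(h x)\<^sup>2 \<le> (\<Sum>z\<in>S. (vn x n z)\<^sup>2) * (\<Sum>z\<in>S. (h z)\<^sup>2)"
      using Cauchy_Schwarz_ineq_sum by metis
    also have "(\<Sum>z\<in>S. (vn x n z)\<^sup>2) = fsum (\<lambda>z. (vn x n z)\<^sup>2)"
      by (rule fsum_eq[symmetric, OF fS]) (simp add: S_def supp_def)
    also have "\<dots> * (\<Sum>z\<in>S. (h z)\<^sup>2) \<le> rho TYPE('d) ^ n * H"
    proof (rule mult_mono)
      show "fsum (\<lambda>z. (vn x n z)\<^sup>2) \<le> rho TYPE('d) ^ n" by (rule vn_norm)
      show "(\<Sum>z\<in>S. (h z)\<^sup>2) \<le> H" unfolding H_def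
        by (rule finite_sum_le_infsum[OF sh fS]) auto
      show "0 \<le> rho TYPE('d) ^ n" using rho_bounds[where 'd='d] by simp
      show "0 \<le> (\<Sum>z\<in>S. (h z)\<^sup>2)" by (rule sum_nonneg) simp
    qed
    finally show ?thesis .
  qed
  have "(\<lambda>n. rho TYPE('d) ^ n * H) \<longlonglongrightarrow> 0 * H"
    by (intro tendsto_mult tendsto_const LIMSEQ_power_zero) (use rho_bounds[where 'd='d] in simp)
  then have "(h x)\<^sup>2 \<le> 0 * H" using bound by (intro LIMSEQ_le_const) auto
  then show ?thesis by simp
qed

lemma Gfree_eq: "Gfree L k a mubar0 x w = Gs w x" for x w :: "int^'d::finite"
proof -
  have P: "(\<lambda>z. (Gs w z)\<^sup>2) summable_on UNIV \<and> (\<forall>z. Afree L k a mubar0 (Gs w) z = delta_pt L k TYPE('d) w z)"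
    using Gs_sq_summable Gs_eq by blast
  have U: "g = Gs w" if "(\<lambda>z. (g z)\<^sup>2) summable_on UNIV \<and> (\<forall>z. Afree L k a mubar0 g z = delta_pt L k TYPE('d) w z)"
    for g :: "int^'d \<Rightarrow> real"
  proof (rule ext)
    fix x
    define h where "h z = g z - Gs w z" for z
    have sh: "(\<lambda>z. (h z)\<^sup>2) summable_on UNIV"
    proof (rule summable_on_comparison_test)
      show "(\<lambda>z. 2 * (g z)\<^sup>2 + 2 * (Gs w z)\<^sup>2) summable_on UNIV"
        using that Gs_sq_summable[of w]
        by (intro summable_on_add summable_on_cmult_right) auto
      show "(h z)\<^sup>2 \<le> 2 * (g z)\<^sup>2 + 2 * (Gs w z)\<^sup>2" for z
        unfolding h_def using zero_le_power2[of "g z + Gs w z"] by (simp add: power2_diff power2_sum)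
      show "0 \<le> (h z)\<^sup>2" for z by simp
    qed
    have hh: "h = (\<lambda>z. g z - Gs w z)" by (rule ext) (simp add: h_def)
    have Ah: "Afree L k a mubar0 h z = 0" for z
      unfolding hh Afree_diff using that Gs_eq[of w z] by simp
    show "g x = Gs w x" using uniq0[OF sh Ah, of x] h_def by simp
  qed
  have "(THE g. (\<lambda>z. (g z)\<^sup>2) summable_on UNIV \<and> (\<forall>z. Afree L k a mubar0 g z = delta_pt L k TYPE('d) w z)) = Gs w"
  proof (rule the_equality)
    show "(\<lambda>z. (Gs w z)\<^sup>2) summable_on UNIV \<and> (\<forall>z. Afree L k a mubar0 (Gs w) z = delta_pt L k TYPE('d) w z)"
      by (rule P)
    fix g assume "(\<lambda>z. (g z)\<^sup>2) summable_on UNIV \<and> (\<forall>z. Afree L k a mubar0 g z = delta_pt L k TYPE('d) w z)"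
    then show "g = Gs w" by (rule U)
  qed
  then show ?thesis unfolding Gfree_def by simp
qed

end

definition Rf :: "int \<Rightarrow> 'd::finite \<Rightarrow> int^'d \<Rightarrow> int^'d" where
  "Rf c \<mu> n = (\<chi> i. if i = \<mu> then c - n$i else n$i)"

lemma Rf_nth: "Rf c \<mu> n $ i = (if i = \<mu> then c - n$i else n$i)" by (simp add: Rf_def)

lemma Rf_Rf[simp]: "Rf c \<mu> (Rf c \<mu> n) = n" by (simp add: Rf_def vec_eq_iff)

lemma Rf_inj: "Rf c \<mu> a = Rf c \<mu> b \<longleftrightarrow> a = b" by (metis Rf_Rf)

lemma bij_Rf: "bij (Rf c \<mu>)" by (rule bij_betwI[of _ _ _ "Rf c \<mu>"]) auto

lemma Rf_eq_iff: "Rf c \<mu> z = w \<longleftrightarrow> z = Rf c \<mu> w" by auto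

lemma Pref_R: "Pref \<mu> = Rf (-1) \<mu>" by (rule ext) (simp add: Pref_def Rf_def)
lemma Pbar_R: "Pbar L m \<mu> = Rf (2 * int L ^ m - 1) \<mu>" by (rule ext) (simp add: Pbar_def Rf_def)

lemma sh_Rf: "sh (Rf c \<mu> x) \<nu> s = Rf c \<mu> (sh x \<nu> (if \<nu> = \<mu> then -s else s))"
  by (simp add: sh_def Rf_def vec_eq_iff)

lemma inj_on_Rf: "inj_on (Rf c \<mu>) A" by (rule inj_onI) (metis Rf_Rf)

context GS begin

lemma blkof_Rf: assumes "el dvd (c + 1)"
  shows "blkof L k (Rf c \<mu> z) = Rf ((c + 1) div el - 1) \<mu> (blkof L k z)"
proof -
  have "(c - z$i) div el = (c + 1) div el - 1 - z$i div el" for i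
    using div_refl_int[OF el_pos assms, of "z$i"] by simp
  then show ?thesis by (simp add: vec_eq_iff blkof_def Rf_def)
qed

lemma blkof_Rf_eq: assumes "el dvd (c + 1)"
  shows "blkof L k (Rf c \<mu> z) = blkof L k (Rf c \<mu> x) \<longleftrightarrow> blkof L k z = blkof L k x"
  unfolding blkof_Rf[OF assms] Rf_inj ..

lemma Pi_Rf: fixes g :: "int^'d::finite \<Rightarrow> real" assumes "el dvd (c + 1)"
  shows "Pi (\<lambda>z. g (Rf c \<mu> z)) x = Pi g (Rf c \<mu> x)"
proof -
  have "Pi (\<lambda>z. g (Rf c \<mu> z)) x = (\<Sum>z\<in>Blk L k (blkof L k x). (1 / real L ^ k) ^ CARD('d) * g (Rf c \<mu> z))"
    by (simp add: Qk_adj_def Qk_def)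
  also have "\<dots> = (\<Sum>z\<in>Blk L k (blkof L k (Rf c \<mu> x)). (1 / real L ^ k) ^ CARD('d) * g z)"
  proof (rule sum.reindex_bij_witness[of _ "Rf c \<mu>" "Rf c \<mu>"])
    show "\<And>a. a \<in> Blk L k (blkof L k (Rf c \<mu> x)) \<Longrightarrow> Rf c \<mu> a \<in> Blk L k (blkof L k x)"
      using blkof_Rf_eq[OF assms] by (metis Blk_iff Rf_Rf)
    show "\<And>a. a \<in> Blk L k (blkof L k x) \<Longrightarrow> Rf c \<mu> a \<in> Blk L k (blkof L k (Rf c \<mu> x))"
      using blkof_Rf_eq[OF assms] by (metis Blk_iff)
  qed auto
  also have "\<dots> = Pi g (Rf c \<mu> x)" by (simp add: Qk_adj_def Qk_def)
  finally show ?thesis .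
qed

lemma Afree_Rf: fixes g :: "int^'d::finite \<Rightarrow> real" assumes "el dvd (c + 1)"
  shows "Afree L k a mubar0 (\<lambda>z. g (Rf c \<mu> z)) x = Afree L k a mubar0 g (Rf c \<mu> x)"
proof -
  have S: "(\<Sum>\<nu>\<in>UNIV. g (Rf c \<mu> (sh x \<nu> 1)) + g (Rf c \<mu> (sh x \<nu> (-1))))
        = (\<Sum>\<nu>\<in>UNIV. g (sh (Rf c \<mu> x) \<nu> 1) + g (sh (Rf c \<mu> x) \<nu> (-1)))"
    by (rule sum.cong[OF refl]) (auto simp: sh_Rf)
  show ?thesis unfolding Afree_split Pi_Rf[OF assms] S by simp
qed

lemma dvd_refl1: "el dvd ((-1) + 1)" by simp
lemma dvd_refl2: "el dvd ((2 * int L ^ m - 1) + 1)"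
proof -
  have "int L ^ k dvd int L ^ m" using mgek by (simp add: le_imp_power_dvd)
  then show ?thesis by simp
qed

lemma uniq_sol: fixes g :: "int^'d::finite \<Rightarrow> real"
  assumes "(\<lambda>z. (g z)\<^sup>2) summable_on UNIV" "\<And>z. Afree L k a mubar0 g z = delta_pt L k TYPE('d) w z"
  shows "g = Gs w"
proof (rule ext)
  fix x
  define h where "h z = g z - Gs w z" for z
  have sh: "(\<lambda>z. (h z)\<^sup>2) summable_on UNIV"
  proof (rule summable_on_comparison_test)
    show "(\<lambda>z. 2 * (g z)\<^sup>2 + 2 * (Gs w z)\<^sup>2) summable_on UNIV"
      using assms(1) Gs_sq_summable[of w]
      by (intro summable_on_add summable_on_cmult_right) auto
    show "(h z)\<^sup>2 \<le> 2 * (g z)\<^sup>2 + 2 * (Gs w z)\<^sup>2" for z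
      unfolding h_def using zero_le_power2[of "g z + Gs w z"] by (simp add: power2_diff power2_sum)
    show "0 \<le> (h z)\<^sup>2" for z by simp
  qed
  have hh: "h = (\<lambda>z. g z - Gs w z)" by (rule ext) (simp add: h_def)
  have Ah: "Afree L k a mubar0 h z = 0" for z
    unfolding hh Afree_diff using assms(2)[of z] Gs_eq[of w z] by simp
  show "g x = Gs w x" using uniq0[OF sh Ah, of x] h_def by simp
qed

lemma Gs_Rf: fixes w :: "int^'d::finite" assumes "el dvd (c + 1)"
  shows "Gs (Rf c \<mu> w) = (\<lambda>z. Gs w (Rf c \<mu> z))"
proof (rule uniq_sol[symmetric])
  show "(\<lambda>z. (Gs w (Rf c \<mu> z))\<^sup>2) summable_on UNIV"
    using summable_on_reindex_bij_betw[of "Rf c \<mu>" UNIV UNIV "\<lambda>z. (Gs w z)\<^sup>2"] bij_Rf[of c \<mu>]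
      Gs_sq_summable[of w] by (simp add: bij_def)
  show "Afree L k a mubar0 (\<lambda>z. Gs w (Rf c \<mu> z)) z = delta_pt L k TYPE('d) (Rf c \<mu> w) z" for z
    unfolding Afree_Rf[OF assms] Gs_eq by (auto simp: delta_pt_def Rf_eq_iff)
qed

end

lemma infsum_fsum_real: fixes f :: "'i \<Rightarrow> 'a \<Rightarrow> real"
  assumes "finite I" "\<And>i. i \<in> I \<Longrightarrow> f i summable_on A"
  shows "(\<lambda>b. \<Sum>i\<in>I. f i b) summable_on A \<and> infsum (\<lambda>b. \<Sum>i\<in>I. f i b) A = (\<Sum>i\<in>I. infsum (f i) A)"
  using assms
proof (induction I rule: finite_induct)
  case empty then show ?case by (auto intro: summable_on_0 infsum_0)
next
  case (insert i I)
  have s1: "f i summable_on A" using insert by auto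
  have IH: "(\<lambda>b. \<Sum>i\<in>I. f i b) summable_on A \<and> infsum (\<lambda>b. \<Sum>i\<in>I. f i b) A = (\<Sum>i\<in>I. infsum (f i) A)"
    using insert by auto
  have e: "(\<lambda>b. \<Sum>i\<in>insert i I. f i b) = (\<lambda>b. f i b + (\<Sum>i\<in>I. f i b))" using insert.hyps by auto
  show ?case unfolding e using s1 IH insert.hyps
    by (simp add: summable_on_add infsum_add)
qed

lemma infsum_delta: "infsum (\<lambda>w. if z = w then (e::real) else 0) A = (if z \<in> A then e else 0)"
proof (cases "z \<in> A")
  case True
  have "infsum (\<lambda>w. if z = w then e else 0) A = infsum (\<lambda>w. if z = w then e else 0) {z}"
    by (rule infsum_cong_neutral) (use True in auto)
  then show ?thesis using True by simp
next
  case False then show ?thesis by (auto intro: infsum_0)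
qed

lemma int_div_lt: assumes "(e::int) > 0" "z < e * q" shows "z div e < q"
proof -
  define t where "t = z div e"
  have "e * t \<le> z" using div_iff_int[OF assms(1), of z t] t_def by simp
  then have "e * t < e * q" using assms(2) by simp
  then show ?thesis using assms(1) t_def by (simp add: mult_less_cancel_left_pos)
qed

context GS begin

abbreviation NN :: int where "NN \<equiv> int L ^ m"

lemma NN_pos: "NN > 0" using L1 by simp

lemma NN_eq: "NN = el * int L ^ (m - k)"
  using mgek by (metis le_add_diff_inverse power_add)

lemma Img_mod: "w \<in> Img L m y \<Longrightarrow> \<forall>i. (2*NN) dvd (w$i - y$i) \<or> (2*NN) dvd (w$i + 1 + y$i)"
proof (induction rule: Img.induct)
  case base then show ?case by simp
next
  case (refl1 w \<mu>)
  show ?case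
  proof
    fix i
    show "(2*NN) dvd (Pref \<mu> w $ i - y$i) \<or> (2*NN) dvd (Pref \<mu> w $ i + 1 + y$i)"
    proof (cases "i = \<mu>")
      case True
      have "Pref \<mu> w $ i - y$i = - (w$i + 1 + y$i)" "Pref \<mu> w $ i + 1 + y$i = - (w$i - y$i)"
        using True by (auto simp: Pref_def)
      then show ?thesis using refl1.IH[rule_format, of i] by (simp only: dvd_minus_iff) blast
    next
      case False then show ?thesis using refl1.IH by (simp add: Pref_def)
    qed
  qed
next
  case (refl2 w \<mu>)
  show ?case
  proof
    fix i
    show "(2*NN) dvd (Pbar L m \<mu> w $ i - y$i) \<or> (2*NN) dvd (Pbar L m \<mu> w $ i + 1 + y$i)"
    proof (cases "i = \<mu>")
      case True
      have "Pbar L m \<mu> w $ i - y$i = 2*NN - (w$i + 1 + y$i)" "Pbar L m \<mu> w $ i + 1 + y$i = 2*NN - (w$i - y$i)"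
        using True by (auto simp: Pbar_def)
      moreover have "(2*NN) dvd (2*NN)" by simp
      ultimately show ?thesis using refl2.IH[rule_format, of i] by (metis dvd_diff)
    next
      case False then show ?thesis using refl2.IH by (simp add: Pbar_def)
    qed
  qed
qed

lemma Img_Omega: assumes "w \<in> Img L m y" "inOmega L m w" "inOmega L m y" shows "w = y"
proof -
  have N: "NN > 0" by (rule NN_pos)
  have "w$i = y$i" for i
  proof -
    have b: "0 \<le> w$i" "w$i < NN" "0 \<le> y$i" "y$i < NN" using assms(2,3) by (auto simp: inOmega_def)
    from Img_mod[OF assms(1)] have "(2*NN) dvd (w$i - y$i) \<or> (2*NN) dvd (w$i + 1 + y$i)" by blast
    then show ?thesis
    proof
      assume "(2*NN) dvd (w$i - y$i)"
      then obtain q where q: "w$i - y$i = 2*NN*q" by (auto elim: dvdE)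
      have "q = 0"
      proof (rule ccontr)
        assume "q \<noteq> 0"
        then have "q \<ge> 1 \<or> q \<le> -1" by linarith
        then show False
        proof
          assume "q \<ge> 1" then have "2*NN*q \<ge> 2*NN*1" using N by (intro mult_left_mono) auto
          then show False using q b by linarith
        next
          assume "q \<le> -1" then have "2*NN*q \<le> 2*NN*(-1)" using N by (intro mult_left_mono) auto
          then show False using q b by linarith
        qed
      qed
      then show ?thesis using q by simp
    next
      assume "(2*NN) dvd (w$i + 1 + y$i)"
      then obtain q where q: "w$i + 1 + y$i = 2*NN*q" by (auto elim: dvdE)
      have "q \<ge> 1 \<or> q \<le> 0" by linarith
      then show ?thesis
      proof
        assume "q \<ge> 1" then have "2*NN*q \<ge> 2*NN*1" using N by (intro mult_left_mono) auto
        then show ?thesis using q b by linarith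
      next
        assume "q \<le> 0" then have "2*NN*q \<le> 2*NN*0" using N by (intro mult_left_mono) auto
        then show ?thesis using q b by linarith
      qed
    qed
  qed
  then show ?thesis by (simp add: vec_eq_iff)
qed

lemma Img_image: assumes "\<And>w. w \<in> Img L m y \<Longrightarrow> Rf c \<mu> w \<in> Img L m y"
  shows "Rf c \<mu> ` Img L m y = Img L m y"
proof
  show "Rf c \<mu> ` Img L m y \<subseteq> Img L m y" using assms by auto
  show "Img L m y \<subseteq> Rf c \<mu> ` Img L m y"
  proof
    fix w assume "w \<in> Img L m y"
    then have "Rf c \<mu> w \<in> Img L m y" by (rule assms)
    moreover have "w = Rf c \<mu> (Rf c \<mu> w)" by simp
    ultimately show "w \<in> Rf c \<mu> ` Img L m y" by blast
  qed
qed

lemma Img_R1: "Rf (-1) \<mu> ` Img L m y = Img L m y"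
  by (rule Img_image) (metis Img.refl1 Pref_R)

lemma Img_R2: "Rf (2 * int L ^ m - 1) \<mu> ` Img L m y = Img L m y"
  by (rule Img_image) (metis Img.refl2 Pbar_R)

definition Fy :: "int^'d::finite \<Rightarrow> int^'d \<Rightarrow> real" where
  "Fy y z = infsum (\<lambda>w. Gs w z) (Img L m y)"

lemma Gs_abs_summable: "(\<lambda>w. norm (Gs w z)) summable_on Img L m y" for z :: "int^'d::finite"
proof -
  define r where "r = rr TYPE('d)"
  define C where "C = Cg TYPE('d)"
  have r0: "0 \<le> r" "r < 1" using rr_bounds[where 'd='d] r_def by auto
  have b: "bij_betw (\<lambda>w::int^'d. z - w) UNIV UNIV" using bij_minus'[of z] by (simp add: bij_def)
  have "(\<lambda>w. dec r (z - w)) summable_on (UNIV :: (int^'d) set)"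
    using summable_on_reindex_bij_betw[OF b, of "dec r"] dec_summable[OF r0] by simp
  then have "(\<lambda>w. C * dec r (z - w)) summable_on (UNIV :: (int^'d) set)" by (rule summable_on_cmult_right)
  then have S: "(\<lambda>w. C * dec r (z - w)) summable_on Img L m y" by (rule summable_on_subset) simp
  show ?thesis
  proof (rule summable_on_comparison_test[OF S])
    fix w show "norm (Gs w z) \<le> C * dec r (z - w)" using Gs_dec[of w z] unfolding C_def r_def by simp
    show "0 \<le> norm (Gs w z)" by simp
  qed
qed

lemma Gs_summable: "(\<lambda>w. Gs w z) summable_on Img L m y" for z :: "int^'d::finite"
  by (rule abs_summable_summable[OF Gs_abs_summable])

lemma Fy_Rf: fixes z y :: "int^'d::finite"
  assumes "el dvd (c + 1)" and im: "Rf c \<mu> ` Img L m y = Img L m y"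
  shows "Fy y (Rf c \<mu> z) = Fy y z"
proof -
  have "Fy y (Rf c \<mu> z) = infsum (\<lambda>w. Gs (Rf c \<mu> w) z) (Img L m y)"
    unfolding Fy_def
  proof (rule infsum_cong)
    fix w show "Gs w (Rf c \<mu> z) = Gs (Rf c \<mu> w) z"
      using fun_cong[OF Gs_Rf[OF assms(1), of \<mu> w], of z] by simp
  qed
  also have "\<dots> = infsum (\<lambda>w. Gs w z) (Rf c \<mu> ` Img L m y)"
    by (subst infsum_reindex[OF inj_on_Rf]) (simp add: o_def)
  also have "\<dots> = Fy y z" unfolding im Fy_def ..
  finally show ?thesis .
qed

lemma Fy_Pref: "Fy y (Pref \<mu> z) = Fy y z"
  unfolding Pref_R by (rule Fy_Rf[OF dvd_refl1 Img_R1])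

lemma Fy_Pbar: "Fy y (Pbar L m \<mu> z) = Fy y z"
  unfolding Pbar_R by (rule Fy_Rf[OF dvd_refl2 Img_R2])

lemma AF: "Afree L k a mubar0 (Fy y) z = infsum (\<lambda>w. delta_pt L k TYPE('d) w z) (Img L m y)"
  for z :: "int^'d::finite"
proof -
  have sm: "(\<lambda>w. Kf z x * Gs w x) summable_on Img L m y" for x
    by (rule summable_on_cmult_right[OF Gs_summable])
  have "Afree L k a mubar0 (Fy y) z = (\<Sum>x\<in>cube z el. Kf z x * Fy y x)" by (rule Afree_K)
  also have "\<dots> = (\<Sum>x\<in>cube z el. infsum (\<lambda>w. Kf z x * Gs w x) (Img L m y))"
    unfolding Fy_def by (rule sum.cong[OF refl]) (simp add: infsum_cmult_right')
  also have "\<dots> = infsum (\<lambda>w. \<Sum>x\<in>cube z el. Kf z x * Gs w x) (Img L m y)"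
    using infsum_fsum_real[of "cube z el" "\<lambda>x w. Kf z x * Gs w x", OF _ sm] by simp
  also have "\<dots> = infsum (\<lambda>w. delta_pt L k TYPE('d) w z) (Img L m y)"
    by (rule infsum_cong) (simp add: Afree_K[symmetric] Gs_eq)
  finally show ?thesis .
qed

lemma AF_Om: fixes y z :: "int^'d::finite" assumes "inOmega L m z" "inOmega L m y"
  shows "Afree L k a mubar0 (Fy y) z = delta_pt L k TYPE('d) y z"
proof -
  have "infsum (\<lambda>w. delta_pt L k TYPE('d) w z) (Img L m y)
      = infsum (\<lambda>w. if z = w then ed TYPE('d) else 0) (Img L m y)"
    by (rule infsum_cong) (simp add: delta_pt_eq dl_def)
  also have "\<dots> = (if z \<in> Img L m y then ed TYPE('d) else 0)" by (rule infsum_delta)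
  also have "\<dots> = delta_pt L k TYPE('d) y z"
    using Img_Omega[OF _ assms] Img.base[of y L m] by (auto simp: delta_pt_eq dl_def)
  finally show ?thesis using AF[of y z] by simp
qed

end

context GS begin

definition gN :: "int^'d::finite \<Rightarrow> int^'d \<Rightarrow> real" where
  "gN y z = (if inOmega L m z then Fy y z else 0)"

lemma out_plus: assumes "inOmega L m z" "\<not> inOmega L m (sh z \<mu> 1)" shows "sh z \<mu> 1 = Pbar L m \<mu> z"
proof -
  have b: "0 \<le> z$i" "z$i < NN" for i using assms(1) by (auto simp: inOmega_def)
  obtain i where i: "\<not> (0 \<le> sh z \<mu> 1 $ i \<and> sh z \<mu> 1 $ i < NN)" using assms(2) by (auto simp: inOmega_def)
  have "i = \<mu>" using i b[of i] by (auto simp: sh_nth split: if_splits)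
  then have "z$\<mu> = NN - 1" using i b[of \<mu>] by (auto simp: sh_nth)
  then show ?thesis by (auto simp: vec_eq_iff sh_nth Pbar_def)
qed

lemma out_minus: assumes "inOmega L m z" "\<not> inOmega L m (sh z \<mu> (-1))" shows "sh z \<mu> (-1) = Pref \<mu> z"
proof -
  have b: "0 \<le> z$i" "z$i < NN" for i using assms(1) by (auto simp: inOmega_def)
  obtain i where i: "\<not> (0 \<le> sh z \<mu> (-1) $ i \<and> sh z \<mu> (-1) $ i < NN)" using assms(2) by (auto simp: inOmega_def)
  have "i = \<mu>" using i b[of i] by (auto simp: sh_nth split: if_splits)
  then have "z$\<mu> = 0" using i b[of \<mu>] by (auto simp: sh_nth)
  then show ?thesis by (auto simp: vec_eq_iff sh_nth Pref_def)
qed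

lemma lapN_gN: assumes "inOmega L m z" shows "lapN L m k (gN y) z = lap L k (Fy y) z"
proof -
  have gz: "gN y z = Fy y z" using assms by (simp add: gN_def)
  have p: "(if inOmega L m (sh z \<mu> 1) then gN y (sh z \<mu> 1) else gN y z) = Fy y (sh z \<mu> 1)" for \<mu>
    using out_plus[OF assms, of \<mu>] Fy_Pbar[of y \<mu> z] gz by (auto simp: gN_def)
  have q: "(if inOmega L m (sh z \<mu> (-1)) then gN y (sh z \<mu> (-1)) else gN y z) = Fy y (sh z \<mu> (-1))" for \<mu>
    using out_minus[OF assms, of \<mu>] Fy_Pref[of y \<mu> z] gz by (auto simp: gN_def)
  show ?thesis unfolding lapN_def lap_def p q using gz by simp
qed

lemma inOmegak_blk: assumes "inOmega L m z" shows "inOmegak L m k (blkof L k z)"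
proof -
  have "0 \<le> z$i div el \<and> z$i div el < int L ^ (m - k)" for i
  proof
    have b: "0 \<le> z$i" "z$i < NN" using assms by (auto simp: inOmega_def)
    show "0 \<le> z$i div el" using b el_pos by (simp add: pos_imp_zdiv_nonneg_iff)
    show "z$i div el < int L ^ (m - k)" using int_div_lt[OF el_pos, of "z$i"] b NN_eq by simp
  qed
  then show ?thesis by (simp add: inOmegak_def blkof_def)
qed

lemma Blk_Om: assumes "inOmega L m z" "x \<in> Blk L k (blkof L k z)" shows "inOmega L m x"
proof -
  have "0 \<le> x$i \<and> x$i < NN" for i
  proof -
    define t where "t = z$i div el"
    have t: "0 \<le> t" "t < int L ^ (m - k)" using inOmegak_blk[OF assms(1)] t_def
      by (auto simp: inOmegak_def blkof_def)
    have x: "el * t \<le> x$i" "x$i < el * t + el" using assms(2) t_def by (auto simp: Blk_def blkof_def)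
    have "0 \<le> el * t" using t el_pos by simp
    moreover have "el * t + el \<le> NN"
    proof -
      have "t + 1 \<le> int L ^ (m - k)" using t by simp
      then have "el * (t + 1) \<le> el * int L ^ (m - k)" using el_pos by (intro mult_left_mono) auto
      then show ?thesis using NN_eq by (simp add: algebra_simps)
    qed
    ultimately show ?thesis using x by linarith
  qed
  then show ?thesis by (simp add: inOmega_def)
qed

lemma Q_gN: assumes "inOmega L m z"
  shows "QOmk_adj L k (QOmk L m k (gN y)) z = Qk_adj L k (Qk L k (Fy y)) z"
proof -
  have "QOmk_adj L k (QOmk L m k (gN y)) z
      = (\<Sum>x\<in>Blk L k (blkof L k z). (1 / real L ^ k) ^ CARD('a) * gN y x)"
    using inOmegak_blk[OF assms] by (simp add: QOmk_adj_def QOmk_def)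
  also have "\<dots> = (\<Sum>x\<in>Blk L k (blkof L k z). (1 / real L ^ k) ^ CARD('a) * Fy y x)"
    by (rule sum.cong[OF refl]) (simp add: gN_def Blk_Om[OF assms])
  also have "\<dots> = Qk_adj L k (Qk L k (Fy y)) z" by (simp add: Qk_adj_def Qk_def)
  finally show ?thesis .
qed

lemma AOm_gN: assumes "inOmega L m z"
  shows "AOm L m k a mubar0 (gN y) z = Afree L k a mubar0 (Fy y) z"
  unfolding AOm_def Afree_def lapN_gN[OF assms] Q_gN[OF assms] using assms by (simp add: gN_def)

definition degN :: "int^'d::finite \<Rightarrow> real" where
  "degN z = (\<Sum>\<mu>\<in>UNIV. (if inOmega L m (sh z \<mu> 1) then 1 else 0) + (if inOmega L m (sh z \<mu> (-1)) then 1 else 0))"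

definition KOm :: "int^'d::finite \<Rightarrow> int^'d \<Rightarrow> real" where
  "KOm z z' = e2 * (degN z * (if z' = z then 1 else 0) - nbr z z') + mk * (if z' = z then 1 else 0) + ak * Pk z z'"

lemma KOm_sym: "KOm z z' = KOm z' z"
  by (cases "z' = z") (auto simp: KOm_def nbr_sym Pk_sym)

lemma finite_Om: "finite {z::int^'d::finite. inOmega L m z}"
proof -
  have "{z::int^'d. inOmega L m z} = {z. \<forall>i. z$i \<in> {0..<NN}}" by (auto simp: inOmega_def)
  moreover have "finite {z::int^'d. \<forall>i. z$i \<in> {0..<NN}}" by (rule finite_vecset) simp
  ultimately show ?thesis by simp
qed

lemma sum_ind2: "finite A \<Longrightarrow> (\<Sum>z\<in>A. (if z = p then 1 else 0) * g z) = (if p \<in> A then (g p :: real) else 0)"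
proof -
  assume f: "finite A"
  have "(\<Sum>z\<in>A. (if z = p then 1 else 0) * g z) = (\<Sum>z\<in>A. if z = p then g z else 0)"
    by (rule sum.cong) auto
  also have "\<dots> = (if p \<in> A then g p else 0)" using f by (simp add: sum.delta)
  finally show ?thesis .
qed

lemma nbrOm_sum: "(\<Sum>z'\<in>{z'. inOmega L m z'}. nbr z z' * g z')
  = (\<Sum>\<mu>\<in>UNIV. (if inOmega L m (sh z \<mu> 1) then g (sh z \<mu> 1) else 0) + (if inOmega L m (sh z \<mu> (-1)) then g (sh z \<mu> (-1)) else 0))"
  (is "?L = ?R")
proof -
  let ?O = "{z'. inOmega L m z'}"
  have "?L = (\<Sum>z'\<in>?O. \<Sum>\<mu>\<in>UNIV. (if z' = sh z \<mu> 1 then 1 else 0) * g z' + (if z' = sh z \<mu> (-1) then 1 else 0) * g z')"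
    unfolding nbr_def by (intro sum.cong refl) (simp add: sum_distrib_left sum_distrib_right algebra_simps)
  also have "\<dots> = (\<Sum>\<mu>\<in>UNIV. \<Sum>z'\<in>?O. (if z' = sh z \<mu> 1 then 1 else 0) * g z' + (if z' = sh z \<mu> (-1) then 1 else 0) * g z')"
    by (rule sum.swap)
  also have "\<dots> = ?R" by (simp add: sum.distrib sum_ind2[OF finite_Om])
  finally show ?thesis .
qed

lemma lapN_eq: "lapN L m k g z = e2 * ((\<Sum>z'\<in>{z'. inOmega L m z'}. nbr z z' * g z') - degN z * g z)"
proof -
  have "(\<Sum>\<mu>\<in>UNIV. (if inOmega L m (sh z \<mu> 1) then g (sh z \<mu> 1) else g z) - 2 * g z
          + (if inOmega L m (sh z \<mu> (-1)) then g (sh z \<mu> (-1)) else g z))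
      = (\<Sum>\<mu>\<in>UNIV. ((if inOmega L m (sh z \<mu> 1) then g (sh z \<mu> 1) else 0) + (if inOmega L m (sh z \<mu> (-1)) then g (sh z \<mu> (-1)) else 0))
          - ((if inOmega L m (sh z \<mu> 1) then 1 else 0) + (if inOmega L m (sh z \<mu> (-1)) then 1 else 0)) * g z)"
    by (rule sum.cong[OF refl]) auto
  also have "\<dots> = (\<Sum>z'\<in>{z'. inOmega L m z'}. nbr z z' * g z') - degN z * g z"
    unfolding sum_subtractf nbrOm_sum degN_def by (simp add: sum_distrib_right)
  finally show ?thesis unfolding lapN_def by simp
qed

lemma QOm_eq: assumes "inOmega L m z"
  shows "QOmk_adj L k (QOmk L m k g) z = (\<Sum>z'\<in>{z'. inOmega L m z'}. Pk z z' * g z')"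
proof -
  have "QOmk_adj L k (QOmk L m k g) z = (\<Sum>x\<in>Blk L k (blkof L k z). (1 / real L ^ k) ^ CARD('a) * g x)"
    using inOmegak_blk[OF assms] by (simp add: QOmk_adj_def QOmk_def)
  also have "Blk L k (blkof L k z) = {z' \<in> {z'. inOmega L m z'}. blkof L k z' = blkof L k z}"
    using Blk_Om[OF assms] Blk_iff by auto
  also have "(\<Sum>x\<in>\<dots>. (1 / real L ^ k) ^ CARD('a) * g x) = (\<Sum>z'\<in>{z'. inOmega L m z'}. Pk z z' * g z')"
    by (subst sum.inter_filter[OF finite_Om]) (auto simp: Pk_def intro!: sum.cong)
  finally show ?thesis .
qed

lemma AOm_K: assumes "inOmega L m z"
  shows "AOm L m k a mubar0 g z = (\<Sum>z'\<in>{z'. inOmega L m z'}. KOm z z' * g z')"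
proof -
  let ?O = "{z'. inOmega L m z'}"
  have zO: "z \<in> ?O" using assms by simp
  have "(\<Sum>z'\<in>?O. KOm z z' * g z')
     = e2 * (degN z * (\<Sum>z'\<in>?O. (if z' = z then 1 else 0) * g z') - (\<Sum>z'\<in>?O. nbr z z' * g z'))
       + mk * (\<Sum>z'\<in>?O. (if z' = z then 1 else 0) * g z') + ak * (\<Sum>z'\<in>?O. Pk z z' * g z')"
    unfolding KOm_def by (simp add: algebra_simps sum.distrib sum_subtractf sum_distrib_left)
  also have "\<dots> = e2 * (degN z * g z - (\<Sum>z'\<in>?O. nbr z z' * g z')) + mk * g z + ak * QOmk_adj L k (QOmk L m k g) z"
    using zO by (simp add: sum_ind2[OF finite_Om] QOm_eq[OF assms])
  also have "\<dots> = AOm L m k a mubar0 g z"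
  proof -
    define S where "S = (\<Sum>z'\<in>?O. nbr z z' * g z')"
    have "lapN L m k g z = e2 * (S - degN z * g z)" unfolding S_def by (rule lapN_eq)
    then show ?thesis unfolding S_def[symmetric] AOm_def by (simp add: algebra_simps)
  qed
  finally show ?thesis by simp
qed

lemma symOm: fixes u v :: "int^'d::finite \<Rightarrow> real"
  shows "(\<Sum>z\<in>{z. inOmega L m z}. u z * AOm L m k a mubar0 v z) = (\<Sum>z\<in>{z. inOmega L m z}. AOm L m k a mubar0 u z * v z)"
proof -
  let ?O = "{z::int^'d. inOmega L m z}"
  have "(\<Sum>z\<in>?O. u z * AOm L m k a mubar0 v z) = (\<Sum>z\<in>?O. \<Sum>z'\<in>?O. u z * KOm z z' * v z')"
    by (rule sum.cong[OF refl]) (simp add: AOm_K sum_distrib_left mult.assoc)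
  also have "\<dots> = (\<Sum>z'\<in>?O. \<Sum>z\<in>?O. u z * KOm z z' * v z')" by (rule sum.swap)
  also have "\<dots> = (\<Sum>z'\<in>?O. AOm L m k a mubar0 u z' * v z')"
    by (rule sum.cong[OF refl]) (simp add: AOm_K sum_distrib_left sum_distrib_right KOm_sym mult_ac)
  finally show ?thesis .
qed

lemma AOm_diff: assumes "inOmega L m z"
  shows "AOm L m k a mubar0 (\<lambda>x. g x - h x) z = AOm L m k a mubar0 g z - AOm L m k a mubar0 h z"
  unfolding AOm_K[OF assms] by (simp add: sum_subtractf[symmetric] algebra_simps)

lemma GOm_eq: fixes x y :: "int^'d::finite" assumes x: "inOmega L m x" and y: "inOmega L m y"
  shows "GOm L m k a mubar0 x y = Fy y x"
proof -
  let ?O = "{z::int^'d. inOmega L m z}"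
  have sol: "\<And>p z. inOmega L m p \<Longrightarrow> inOmega L m z \<Longrightarrow> AOm L m k a mubar0 (gN p) z = delta_pt L k TYPE('d) p z"
    by (metis AOm_gN AF_Om)
  have P: "(\<forall>z. \<not> inOmega L m z \<longrightarrow> gN y z = 0) \<and> (\<forall>z. inOmega L m z \<longrightarrow> AOm L m k a mubar0 (gN y) z = delta_pt L k TYPE('d) y z)"
    using sol[OF y] by (auto simp: gN_def)
  have U: "g = gN y" if g: "(\<forall>z. \<not> inOmega L m z \<longrightarrow> g z = 0) \<and> (\<forall>z. inOmega L m z \<longrightarrow> AOm L m k a mubar0 g z = delta_pt L k TYPE('d) y z)"
    for g :: "int^'d \<Rightarrow> real"
  proof (rule ext)
    fix p
    define h where "h z = g z - gN y z" for z
    have hh: "h = (\<lambda>z. g z - gN y z)" by (rule ext) (simp add: h_def)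
    have h0: "\<not> inOmega L m z \<Longrightarrow> h z = 0" for z using g by (simp add: h_def gN_def)
    have Ah: "AOm L m k a mubar0 h z = 0" if z: "inOmega L m z" for z
      unfolding hh AOm_diff[OF z] using g z sol[OF y z] by simp
    have "h p = 0"
    proof (cases "inOmega L m p")
      case False then show ?thesis by (rule h0)
    next
      case True
      have "(\<Sum>z\<in>?O. h z * AOm L m k a mubar0 (gN p) z) = (\<Sum>z\<in>?O. h z * delta_pt L k TYPE('d) p z)"
        by (rule sum.cong[OF refl]) (simp add: sol[OF True])
      also have "\<dots> = (\<Sum>z\<in>?O. (if z = p then 1 else 0) * (ed TYPE('d) * h z))"
        by (rule sum.cong[OF refl]) (simp add: delta_pt_eq dl_def)
      also have "\<dots> = ed TYPE('d) * h p" using True by (simp add: sum_ind2[OF finite_Om])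
      finally have e1: "(\<Sum>z\<in>?O. h z * AOm L m k a mubar0 (gN p) z) = ed TYPE('d) * h p" .
      have "(\<Sum>z\<in>?O. h z * AOm L m k a mubar0 (gN p) z) = (\<Sum>z\<in>?O. AOm L m k a mubar0 h z * gN p z)"
        by (rule symOm)
      also have "\<dots> = 0" by (rule sum.neutral) (simp add: Ah)
      finally have "ed TYPE('d) * h p = 0" using e1 by simp
      then show ?thesis using ed_pos[where 'd='d] by simp
    qed
    then show "g p = gN y p" by (simp add: h_def)
  qed
  have "(THE g. (\<forall>z. \<not> inOmega L m z \<longrightarrow> g z = 0) \<and> (\<forall>z. inOmega L m z \<longrightarrow> AOm L m k a mubar0 g z = delta_pt L k TYPE('d) y z)) = gN y"
  proof (rule the_equality)
    show "(\<forall>z. \<not> inOmega L m z \<longrightarrow> gN y z = 0) \<and> (\<forall>z. inOmega L m z \<longrightarrow> AOm L m k a mubar0 (gN y) z = delta_pt L k TYPE('d) y z)"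
      by (rule P)
    fix g assume "(\<forall>z. \<not> inOmega L m z \<longrightarrow> g z = 0) \<and> (\<forall>z. inOmega L m z \<longrightarrow> AOm L m k a mubar0 g z = delta_pt L k TYPE('d) y z)"
    then show "g = gN y" by (rule U)
  qed
  then show ?thesis unfolding GOm_def using x by (simp add: gN_def)
qed

end

theorem mainTheorem17:
  fixes L m k :: nat and a mubar0 :: real and x y :: "int^'d::finite"
  assumes "odd L" and "L > 1" and "k \<ge> 1" and "m \<ge> k"
    and "0 < a" and "a \<le> 1" and "mubar0 \<ge> 0"
    and "inOmega L m x" and "inOmega L m y"
  shows "(\<lambda>w. norm (Gfree L k a mubar0 x w)) summable_on Img L m y \<and>
         GOm L m k a mubar0 x y = (\<Sum>\<^sub>\<infinity>w\<in>Img L m y. Gfree L k a mubar0 x w)"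
proof -
  interpret GS L m k a mubar0 using assms(1-7) by unfold_locales
  have G: "Gfree L k a mubar0 x w = Gs w x" for w by (rule Gfree_eq)
  show ?thesis
    using Gs_abs_summable[of x y] GOm_eq[OF assms(8,9)] by (simp add: G Fy_def)
qed


end
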